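(* Let $\Gamma$ be isotropic or co-isotropic, $m\ge2$, and $\mathcal{O}_{m-1}$ as in the context (at any point $p=\gamma(t)\in\Gamma$). Then $$\sqrt{\det\mathcal{O}_{m-1}}=\begin{cases}m^{d/2}&\text{if }\Gamma\text{ is isotropic},\\ 2^{(d-n)(m-1)}\,m^{n-\frac d2}&\text{if }\Gamma\text{ is co-isotropic}.\end{cases}$$ Equivalently, $2^{\frac{d(m-1)}{2}}(\det\mathcal{O}_{m-1})^{-1/2}=2^{\frac{d'(m-1)}{2}}m^{-\frac{d'}{2}}$, where $d'=d$ if $\Gamma$ is isotropic and $d'=2n-d$ if co-isotropic.
   Context: $\mathbb{B}_n=\{z\in\mathbb{C}^n:|z|<1\}$ with the Riemannian metric $\mathring b$ induced by the Bergman Hermitian metric $b_{jk}(p)=\frac{1}{n+1}\frac{\partial^2}{\partial z_j\partial\bar z_k}\log(1-|z|^2)^{-(n+1)}|_{z=p}$; $J$ is the standard complex structure, $\omega_p(\xi,\nu)=\mathring b_p(\xi,J\nu)$. $\Gamma\subseteq\mathbb{B}_n$ is an embedded submanifold of dimension $d$ with inclusion $\iota$; it is isotropic (resp. co-isotropic) if for each $p$ the subspace $V=D_p\iota(T_p\Gamma)$ satisfies $V\subseteq V^\omega$ (resp. $V^\omega\subseteq V$), where $V^\omega=\{\xi:\omega_p(\xi,v)=0\ \forall v\in V\}$. For a parametrization $\gamma:B(0,1)\subset\mathbb{R}^d\to\Gamma$ with $p=\gamma(t)$, let $G=(g_{jk}(p))$, $g_{jk}(p)=\mathring b_p(D_p\iota\,\partial_{t_j},D_p\iota\,\partial_{t_k})$,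 $H=(h_{jk}(p))$, $h_{jk}(p)=\omega_p(D_p\iota\,\partial_{t_j},D_p\iota\,\partial_{t_k})$, and $W=G^{-1}H$. $\mathcal{O}_{m-1}$ is the $(m-1)d\times(m-1)d$ matrix which, as an $(m-1)\times(m-1)$ block matrix with $d\times d$ blocks, is block tridiagonal with diagonal blocks $2I$, superdiagonal blocks $-I-iW$, subdiagonal blocks $-I+iW$, and all other blocks zero. The square root is the positive one. *)

theory Defs
  imports "HOL-Analysis.Analysis" "Jordan_Normal_Form.Determinant"
    "Jordan_Normal_Form.Gauss_Jordan_Elimination"
begin

text \<open>Points of C^n are vectors of type complex^'n, n = CARD('n).
  The Bergman Hermitian metric b_jk(p) = 1/(n+1) d_j dbar_k log (1-|z|^2)^(-(n+1)) at p,
  written out explicitly: b_jk(p) = delta_jk/(1-|p|^2) + conj(p_j) p_k/(1-|p|^2)^2.\<close>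

definition bergman_herm :: "complex^'n \<Rightarrow> 'n \<Rightarrow> 'n \<Rightarrow> complex" where
  "bergman_herm p j k =
     (if j = k then 1 / complex_of_real (1 - (norm p)^2) else 0)
     + cnj (p $ j) * p $ k / complex_of_real ((1 - (norm p)^2)^2)"

definition bergman_riem :: "complex^'n \<Rightarrow> complex^'n \<Rightarrow> complex^'n \<Rightarrow> real" where
  "bergman_riem p xi nu = Re (\<Sum>j\<in>UNIV. \<Sum>k\<in>UNIV. bergman_herm p j k * xi $ j * cnj (nu $ k))"

definition Jcx :: "complex^'n \<Rightarrow> complex^'n" where
  "Jcx v = (\<chi> j. \<i> * v $ j)"

definition omega :: "complex^'n \<Rightarrow> complex^'n \<Rightarrow> complex^'n \<Rightarrow> real" where
  "omega p xi nu = bergman_riem p xi (Jcx nu)"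

definition sympl_compl :: "complex^'n \<Rightarrow> (complex^'n) set \<Rightarrow> (complex^'n) set" where
  "sympl_compl p V = {xi. \<forall>v\<in>V. omega p xi v = 0}"

definition local_param :: "(complex^'n) set \<Rightarrow> (complex^'n) set \<Rightarrow> (real^'d \<Rightarrow> complex^'n) \<Rightarrow> bool" where
  "local_param \<Gamma> U \<gamma> \<longleftrightarrow> open U \<and>
     (\<exists>\<gamma>'. homeomorphism (ball 0 1) (\<Gamma> \<inter> U) \<gamma> \<gamma>') \<and>
     (\<forall>t\<in>ball 0 1. \<gamma> differentiable (at t) \<and> inj (frechet_derivative \<gamma> (at t))) \<and>
     (\<forall>i. continuous_on (ball 0 1) (\<lambda>t. frechet_derivative \<gamma> (at t) (axis i 1)))"

definition embedded_submanifold :: "'d::finite itself \<Rightarrow> (complex^'n) set \<Rightarrow> bool" where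
  "embedded_submanifold _ \<Gamma> \<longleftrightarrow> \<Gamma> \<subseteq> ball 0 1 \<and>
     (\<forall>p\<in>\<Gamma>. \<exists>U (\<gamma>::real^'d \<Rightarrow> complex^'n). p \<in> U \<and> local_param \<Gamma> U \<gamma>)"

text \<open>The tangent subspace V = D_p iota (T_p \<Gamma>), computed through local parametrizations.\<close>
definition tangent_image :: "'d::finite itself \<Rightarrow> (complex^'n) set \<Rightarrow> complex^'n \<Rightarrow> (complex^'n) set" where
  "tangent_image _ \<Gamma> p = {v. \<exists>U (\<gamma>::real^'d \<Rightarrow> complex^'n) t. local_param \<Gamma> U \<gamma> \<and>
      t \<in> ball 0 1 \<and> \<gamma> t = p \<and> v \<in> range (frechet_derivative \<gamma> (at t))}"

definition isotropic :: "'d::finite itself \<Rightarrow> (complex^'n) set \<Rightarrow> bool" where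
  "isotropic D \<Gamma> \<longleftrightarrow> (\<forall>p\<in>\<Gamma>. tangent_image D \<Gamma> p \<subseteq> sympl_compl p (tangent_image D \<Gamma> p))"

definition coisotropic :: "'d::finite itself \<Rightarrow> (complex^'n) set \<Rightarrow> bool" where
  "coisotropic D \<Gamma> \<longleftrightarrow> (\<forall>p\<in>\<Gamma>. sympl_compl p (tangent_image D \<Gamma> p) \<subseteq> tangent_image D \<Gamma> p)"

text \<open>A fixed enumeration 0..d-1 of the coordinate directions of R^d (the determinant below
  does not depend on this choice).\<close>
definition coord_enum :: "nat \<Rightarrow> 'd::finite" where
  "coord_enum = (SOME f. bij_betw f {..<CARD('d)} (UNIV::'d set))"

definition partial_t :: "(real^'d \<Rightarrow> complex^'n) \<Rightarrow> real^'d \<Rightarrow> nat \<Rightarrow> complex^'n" where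
  "partial_t \<gamma> t j = frechet_derivative \<gamma> (at t) (axis (coord_enum j) 1)"

definition G_mat :: "(real^'d \<Rightarrow> complex^'n) \<Rightarrow> real^'d \<Rightarrow> real mat" where
  "G_mat \<gamma> t = mat CARD('d) CARD('d)
     (\<lambda>(j,k). bergman_riem (\<gamma> t) (partial_t \<gamma> t j) (partial_t \<gamma> t k))"

definition H_mat :: "(real^'d \<Rightarrow> complex^'n) \<Rightarrow> real^'d \<Rightarrow> real mat" where
  "H_mat \<gamma> t = mat CARD('d) CARD('d)
     (\<lambda>(j,k). omega (\<gamma> t) (partial_t \<gamma> t j) (partial_t \<gamma> t k))"

definition W_mat :: "(real^'d \<Rightarrow> complex^'n) \<Rightarrow> real^'d \<Rightarrow> real mat" where
  "W_mat \<gamma> t = the (mat_inverse (G_mat \<gamma> t)) * H_mat \<gamma> t"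

text \<open>O_{m-1} for a d x d matrix W: block tridiagonal with (m-1) x (m-1) blocks,
  diagonal 2I, superdiagonal -I - iW, subdiagonal -I + iW.\<close>
definition O_mat :: "nat \<Rightarrow> real mat \<Rightarrow> complex mat" where
  "O_mat m W = (let d = dim_row W in mat ((m-1)*d) ((m-1)*d) (\<lambda>(i,j).
     let a = i div d; b = j div d; r = i mod d; s = j mod d;
         I = (if r = s then 1 else 0) :: complex;
         w = complex_of_real (W $$ (r,s)) in
     if a = b then 2 * I
     else if b = a + 1 then - I - \<i> * w
     else if a = b + 1 then - I + \<i> * w
     else 0))"

end

theory Submission
  imports Defs
begin

definition blk :: "nat \<Rightarrow> nat \<Rightarrow> (nat \<Rightarrow> nat \<Rightarrow> complex mat) \<Rightarrow> complex mat" where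
 "blk k d F = mat (k*d) (k*d) (\<lambda>(i,j). F (i div d) (j div d) $$ (i mod d, j mod d))"

lemma sum_blocks: fixes k d :: nat shows "(\<Sum>l<k*d. f l) = (\<Sum>b<k. \<Sum>s<d. f (b*d+s)) "
proof (induction k)
  case 0 then show ?case by simp
next
  case (Suc k)
  have "(\<Sum>l<Suc k*d. f l) = (\<Sum>l\<in>{0..<k*d}. f l) + (\<Sum>l\<in>{k*d..<k*d+d}. f l)"
    by (simp add: sum.atLeastLessThan_concat lessThan_atLeast0 add.commute)
  also have "(\<Sum>l\<in>{k*d..<k*d+d}. f l) = (\<Sum>s<d. f (k*d+s))"
    by (rule sum.reindex_bij_witness[of _ "\<lambda>s. k*d+s" "\<lambda>l. l - k*d"]) auto
  finally show ?case using Suc by (simp add: lessThan_atLeast0)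
qed

lemma prod_blocks: fixes k d :: nat shows "(\<Prod>l<k*d. f l) = (\<Prod>b<k. \<Prod>s<d. f (b*d+s)) "
proof (induction k)
  case 0 then show ?case by simp
next
  case (Suc k)
  have "(\<Prod>l<Suc k*d. f l) = (\<Prod>l\<in>{0..<k*d}. f l) * (\<Prod>l\<in>{k*d..<k*d+d}. f l)"
    by (simp add: prod.atLeastLessThan_concat lessThan_atLeast0 add.commute)
  also have "(\<Prod>l\<in>{k*d..<k*d+d}. f l) = (\<Prod>s<d. f (k*d+s))"
    by (rule prod.reindex_bij_witness[of _ "\<lambda>s. k*d+s" "\<lambda>l. l - k*d"]) auto
  finally show ?case using Suc by (simp add: lessThan_atLeast0)
qed

lemma blk_carrier[simp]: "blk k d F \<in> carrier_mat (k*d) (k*d)"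
  by (simp add: blk_def)
lemma blk_dim[simp]: "dim_row (blk k d F) = k*d" "dim_col (blk k d F) = k*d"
  by (simp_all add: blk_def)

lemma blk_index: "i < k*d \<Longrightarrow> j < k*d \<Longrightarrow> blk k d F $$ (i,j) = F (i div d) (j div d) $$ (i mod d, j mod d)"
  by (simp add: blk_def)

lemma blk_mult:
  assumes F: "\<And>a b. F a b \<in> carrier_mat d d" and G: "\<And>a b. G a b \<in> carrier_mat d d"
    and H: "\<And>a c r u. a < k \<Longrightarrow> c < k \<Longrightarrow> r < d \<Longrightarrow> u < d \<Longrightarrow>
       H a c $$ (r,u) = (\<Sum>b<k. (F a b * G b c) $$ (r,u))"
  shows "blk k d F * blk k d G = blk k d H"
proof (rule eq_matI)
  fix i j assume i: "i < dim_row (blk k d H)" and j: "j < dim_col (blk k d H)"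
  then have i': "i < k*d" and j': "j < k*d" by auto
  then have d: "d > 0" by (cases d) auto
  have ia: "i div d < k" using i' by (simp add: less_mult_imp_div_less)
  have ja: "j div d < k" using j' by (simp add: less_mult_imp_div_less)
  have "(blk k d F * blk k d G) $$ (i,j) = (\<Sum>l<k*d. blk k d F $$ (i,l) * blk k d G $$ (l,j))"
    using i' j' by (simp add: scalar_prod_def lessThan_atLeast0 blk_def)
  also have "\<dots> = (\<Sum>b<k. \<Sum>s<d. blk k d F $$ (i,b*d+s) * blk k d G $$ (b*d+s,j))"
    by (rule sum_blocks)
  also have "\<dots> = (\<Sum>b<k. (F (i div d) b * G b (j div d)) $$ (i mod d, j mod d))"
  proof (rule sum.cong[OF refl])
    fix b assume b: "b \<in> {..<k}"
    have lt: "s < d \<Longrightarrow> b*d+s < k*d" for s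
    proof -
      assume s: "s < d"
      have "b*d+s < (b+1)*d" using s by simp
      also have "(b+1)*d \<le> k*d" using b by (intro mult_le_mono1) simp
      finally show ?thesis .
    qed
    show "(\<Sum>s<d. blk k d F $$ (i,b*d+s) * blk k d G $$ (b*d+s,j)) = (F (i div d) b * G b (j div d)) $$ (i mod d, j mod d)"
    proof -
      have dv: "s < d \<Longrightarrow> (b*d+s) div d = b" for s using d by simp
      have md: "s < d \<Longrightarrow> (b*d+s) mod d = s" for s using d by simp
      have "(\<Sum>s<d. blk k d F $$ (i,b*d+s) * blk k d G $$ (b*d+s,j)) =
         (\<Sum>s<d. F (i div d) b $$ (i mod d, s) * G b (j div d) $$ (s, j mod d))"
        by (rule sum.cong[OF refl]) (simp add: blk_index lt i' j' dv md)
      also have "\<dots> = (F (i div d) b * G b (j div d)) $$ (i mod d, j mod d)"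
        using F[of "i div d" b] G[of b "j div d"] d
        by (simp add: scalar_prod_def lessThan_atLeast0)
      finally show ?thesis .
    qed
  qed
  also have "\<dots> = H (i div d) (j div d) $$ (i mod d, j mod d)"
    using H[OF ia ja] d by simp
  finally show "(blk k d F * blk k d G) $$ (i,j) = blk k d H $$ (i,j)"
    using i' j' by (simp add: blk_index)
qed auto

definition dg :: "nat \<Rightarrow> (nat \<Rightarrow> complex) \<Rightarrow> complex mat" where
  "dg d f = mat d d (\<lambda>(i,j). if i = j then f i else 0)"

lemma dg_carrier[simp]: "dg d f \<in> carrier_mat d d" by (simp add: dg_def)
lemma dg_index[simp]: "i < d \<Longrightarrow> j < d \<Longrightarrow> dg d f $$ (i,j) = (if i = j then f i else 0)"
  by (simp add: dg_def)
lemma dg_dim[simp]: "dim_row (dg d f) = d" "dim_col (dg d f) = d" by (simp_all add: dg_def)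

lemma dg_mult_left:
  assumes M: "M \<in> carrier_mat d n" and i: "i < d" and j: "j < n"
  shows "(dg d f * M) $$ (i,j) = f i * M $$ (i,j)"
proof -
  have "(dg d f * M) $$ (i,j) = (\<Sum>s\<in>{0..<d}. (if i = s then f i else 0) * M $$ (s,j))"
    using M i j by (simp add: scalar_prod_def)
  also have "\<dots> = (\<Sum>s\<in>{0..<d}. if s = i then f i * M $$ (s,j) else 0)"
    by (rule sum.cong) auto
  also have "\<dots> = f i * M $$ (i,j)" using i by (simp add: sum.delta)
  finally show ?thesis .
qed

lemma dg_mult_right:
  assumes M: "M \<in> carrier_mat n d" and i: "i < n" and j: "j < d"
  shows "(M * dg d f) $$ (i,j) = M $$ (i,j) * f j"
proof -
  have "(M * dg d f) $$ (i,j) = (\<Sum>s\<in>{0..<d}. M $$ (i,s) * (if s = j then f s else 0))"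
    using M i j by (simp add: scalar_prod_def)
  also have "\<dots> = (\<Sum>s\<in>{0..<d}. if s = j then M $$ (i,s) * f j else 0)"
    by (rule sum.cong) auto
  also have "\<dots> = M $$ (i,j) * f j" using j by (simp add: sum.delta)
  finally show ?thesis .
qed

lemma dg_mult: "dg d f * dg d g = dg d (\<lambda>i. f i * g i)"
proof (rule eq_matI)
  fix i j assume "i < dim_row (dg d (\<lambda>i. f i * g i))" "j < dim_col (dg d (\<lambda>i. f i * g i))"
  then have i: "i < d" and j: "j < d" by auto
  show "(dg d f * dg d g) $$ (i, j) = dg d (\<lambda>i. f i * g i) $$ (i, j)"
    using dg_mult_left[OF dg_carrier i j, of f g] i j by simp
qed auto

definition cc :: "nat \<Rightarrow> complex" where "cc a = (of_nat a + 2) / (of_nat a + 1)"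

definition Fo :: "nat \<Rightarrow> complex mat \<Rightarrow> nat \<Rightarrow> nat \<Rightarrow> complex mat" where
  "Fo d X a b = (if a = b then 2 \<cdot>\<^sub>m 1\<^sub>m d else if b = a+1 then - 1\<^sub>m d - \<i> \<cdot>\<^sub>m X
      else if a = b+1 then - 1\<^sub>m d + \<i> \<cdot>\<^sub>m X else 0\<^sub>m d d)"

lemma Fo_carrier[simp]: "X \<in> carrier_mat d d \<Longrightarrow> Fo d X a b \<in> carrier_mat d d"
  by (simp add: Fo_def minus_carrier_mat uminus_carrier_mat)

lemma commute_dg:
  assumes M: "M \<in> carrier_mat d d"
    and comp: "\<And>r u. r < d \<Longrightarrow> u < d \<Longrightarrow> M $$ (r,u) \<noteq> 0 \<Longrightarrow> \<delta> r = \<delta> u"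
  shows "M * dg d (\<lambda>i. h (\<delta> i)) = dg d (\<lambda>i. h (\<delta> i)) * M"
proof (rule eq_matI)
  fix i j assume "i < dim_row (dg d (\<lambda>i. h (\<delta> i)) * M)" "j < dim_col (dg d (\<lambda>i. h (\<delta> i)) * M)"
  then have i: "i < d" and j: "j < d" using M by auto
  show "(M * dg d (\<lambda>i. h (\<delta> i))) $$ (i,j) = (dg d (\<lambda>i. h (\<delta> i)) * M) $$ (i,j)"
    using comp[OF i j] by (cases "M $$ (i,j) = 0") (auto simp: dg_mult_left[OF M i j] dg_mult_right[OF M i j])
qed (use M in auto)

lemma sum_two:
  assumes a: "a < (k::nat)" and z: "\<And>b. b < k \<Longrightarrow> b \<noteq> a \<Longrightarrow> Suc b \<noteq> a \<Longrightarrow> g b = (0::complex)"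
  shows "(\<Sum>b<k. g b) = g a + (if a > 0 then g (a-1) else 0)"
proof -
  have "(\<Sum>b<k. g b) = g a + (\<Sum>b\<in>{..<k}-{a}. g b)"
    using a by (simp add: sum.remove)
  also have "(\<Sum>b\<in>{..<k}-{a}. g b) = (if a > 0 then g (a-1) else 0)"
  proof (cases "a > 0")
    case True
    have "(\<Sum>b\<in>{..<k}-{a}. g b) = g (a-1) + (\<Sum>b\<in>{..<k}-{a}-{a-1}. g b)"
      using a True by (subst sum.remove[of _ "a-1"]) auto
    also have "(\<Sum>b\<in>{..<k}-{a}-{a-1}. g b) = 0"
      by (intro sum.neutral ballI z) (use True in auto)
    finally show ?thesis using True by simp
  next
    case False
    then show ?thesis by (auto intro!: sum.neutral z)
  qed
  finally show ?thesis .
qed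

lemma of_nat_p_nz: "(of_nat a + 1 :: complex) \<noteq> 0" "(of_nat a + 2 :: complex) \<noteq> 0" "(of_nat a + 3 :: complex) \<noteq> 0"
proof -
  have "(of_nat (Suc a) :: complex) \<noteq> 0" "(of_nat (Suc (Suc a)) :: complex) \<noteq> 0"
    "(of_nat (Suc (Suc (Suc a))) :: complex) \<noteq> 0" by (rule of_nat_neq_0)+
  then show "(of_nat a + 1 :: complex) \<noteq> 0" "(of_nat a + 2 :: complex) \<noteq> 0" "(of_nat a + 3 :: complex) \<noteq> 0"
    by (simp_all add: add.commute numeral_3_eq_3)
qed

lemma cc_nz: "cc a \<noteq> 0"
  using of_nat_p_nz[of a] by (simp add: cc_def)

lemma cc_0: "cc 0 = 2" by (simp add: cc_def)

lemma cc_rec: "a > 0 \<Longrightarrow> cc a + 1 / cc (a - 1) = 2"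
proof -
  assume a: "a > 0"
  then obtain b where b: "a = Suc b" by (cases a) auto
  note nz = of_nat_p_nz[of b]
  have 1: "cc a = (of_nat b + 3) / (of_nat b + 2)" unfolding b cc_def
    by (simp add: add.assoc add.commute)
  have 2: "1 / cc (a - 1) = (of_nat b + 1) / (of_nat b + 2)" unfolding b cc_def by simp
  have "cc a + 1 / cc (a - 1) = ((of_nat b + 3) + (of_nat b + 1)) / (of_nat b + 2)"
    unfolding 1 2 by (simp add: add_divide_distrib)
  also have "(of_nat b + 3) + (of_nat b + 1) = 2 * (of_nat b + (2::complex))" by simp
  also have "2 * (of_nat b + (2::complex)) / (of_nat b + 2) = 2"
    by (rule nonzero_mult_div_cancel_right[OF nz(2)])
  finally show ?thesis .
qed

locale luctx =
  fixes d :: nat and X :: "complex mat" and \<delta> :: "nat \<Rightarrow> complex"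
  assumes X: "X \<in> carrier_mat d d" and XX: "- (X * X) = dg d \<delta>"
    and d01: "\<And>i. i < d \<Longrightarrow> \<delta> i = 0 \<or> \<delta> i = 1"
begin

definition "Am = 1\<^sub>m d + \<i> \<cdot>\<^sub>m X"
definition "Bm = 1\<^sub>m d - \<i> \<cdot>\<^sub>m X"
definition "dm a i = (if \<delta> i = 1 then 2 else cc a)"
definition "di a i = (if \<delta> i = 1 then 1/2 else 1 / cc a)"
definition "Lf a b = (if a = b then 1\<^sub>m d else if a = b+1 then - (Bm * dg d (di b)) else 0\<^sub>m d d)"
definition "Uf a b = (if a = b then dg d (dm a) else if b = a+1 then - Am else 0\<^sub>m d d)"

lemma Am_carrier[simp]: "Am \<in> carrier_mat d d" and Bm_carrier[simp]: "Bm \<in> carrier_mat d d"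
  using X by (auto simp: Am_def Bm_def minus_carrier_mat)

lemma BD_carrier[simp]: "Bm * dg d f \<in> carrier_mat d d"
  by (rule mult_carrier_mat[OF Bm_carrier dg_carrier])

lemma Lf_carrier[simp]: "Lf a b \<in> carrier_mat d d"
  by (auto simp: Lf_def uminus_carrier_mat)
lemma Uf_carrier[simp]: "Uf a b \<in> carrier_mat d d"
  by (auto simp: Uf_def uminus_carrier_mat)

lemma X_compat:
  assumes r: "r < d" and u: "u < d" and nz: "X $$ (r,u) \<noteq> 0"
  shows "\<delta> r = \<delta> u"
proof -
  have "X * dg d \<delta> = dg d \<delta> * X"
    unfolding XX[symmetric] using X by simp
  then have "(X * dg d \<delta>) $$ (r,u) = (dg d \<delta> * X) $$ (r,u)" by simp
  then have "X $$ (r,u) * \<delta> u = \<delta> r * X $$ (r,u)"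
    by (simp only: dg_mult_left[OF X r u] dg_mult_right[OF X r u])
  then show ?thesis using nz by simp
qed

lemma Am_compat: "r < d \<Longrightarrow> u < d \<Longrightarrow> Am $$ (r,u) \<noteq> 0 \<Longrightarrow> \<delta> r = \<delta> u"
  using X_compat X by (cases "r = u") (auto simp: Am_def)
lemma Bm_compat: "r < d \<Longrightarrow> u < d \<Longrightarrow> Bm $$ (r,u) \<noteq> 0 \<Longrightarrow> \<delta> r = \<delta> u"
  using X_compat X by (cases "r = u") (auto simp: Bm_def)

lemma BA: "Bm * Am = 1\<^sub>m d - dg d \<delta>"
proof -
  have "Bm * Am = 1\<^sub>m d * Am - (\<i> \<cdot>\<^sub>m X) * Am"
    unfolding Bm_def by (rule minus_mult_distrib_mat[of _ d d _ _ d]) (use X in auto)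
  also have "(\<i> \<cdot>\<^sub>m X) * Am = \<i> \<cdot>\<^sub>m X + (\<i> * \<i>) \<cdot>\<^sub>m (X * X)"
  proof -
    have "(\<i> \<cdot>\<^sub>m X) * Am = (\<i> \<cdot>\<^sub>m X) * 1\<^sub>m d + (\<i> \<cdot>\<^sub>m X) * (\<i> \<cdot>\<^sub>m X)"
      unfolding Am_def by (rule mult_add_distrib_mat[of _ d d]) (use X in auto)
    also have "(\<i> \<cdot>\<^sub>m X) * 1\<^sub>m d = \<i> \<cdot>\<^sub>m X" using X by simp
    also have "(\<i> \<cdot>\<^sub>m X) * (\<i> \<cdot>\<^sub>m X) = \<i> \<cdot>\<^sub>m (X * (\<i> \<cdot>\<^sub>m X))"
      by (rule mult_smult_assoc_mat[of _ d d]) (use X in auto)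
    also have "X * (\<i> \<cdot>\<^sub>m X) = \<i> \<cdot>\<^sub>m (X * X)"
      by (rule mult_smult_distrib[of _ d d]) (use X in auto)
    also have "\<i> \<cdot>\<^sub>m (\<i> \<cdot>\<^sub>m (X * X)) = (\<i> * \<i>) \<cdot>\<^sub>m (X * X)"
      by (rule eq_matI) auto
    finally show ?thesis .
  qed
  also have "X * X = - dg d \<delta>" using XX by (metis uminus_uminus_mat)
  finally show ?thesis
    using X by (intro eq_matI) (auto simp: Am_def)
qed

lemma di_h: "di a = (\<lambda>i. (\<lambda>x. if x = 1 then 1/2 else 1 / cc a) (\<delta> i))"
  by (auto simp: di_def)

lemma BDA: "Bm * dg d (di a) * Am = dg d (\<lambda>i. (1 - \<delta> i) * di a i)"
proof -
  have comm: "Am * dg d (di a) = dg d (di a) * Am"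
    unfolding di_h by (rule commute_dg[OF Am_carrier Am_compat])
  have "Bm * dg d (di a) * Am = Bm * (dg d (di a) * Am)"
    by (rule assoc_mult_mat[OF Bm_carrier dg_carrier Am_carrier])
  also have "\<dots> = Bm * (Am * dg d (di a))" by (simp add: comm)
  also have "\<dots> = (Bm * Am) * dg d (di a)"
    by (rule assoc_mult_mat[OF Bm_carrier Am_carrier dg_carrier, symmetric])
  also have "\<dots> = dg d (\<lambda>i. 1 - \<delta> i) * dg d (di a)"
    unfolding BA by (rule arg_cong[where f="\<lambda>M. M * dg d (di a)"]) (rule eq_matI, auto)
  also have "\<dots> = dg d (\<lambda>i. (1 - \<delta> i) * di a i)" by (rule dg_mult)
  finally show ?thesis .
qed

lemma DiD: "dg d (di a) * dg d (dm a) = 1\<^sub>m d"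
  unfolding dg_mult by (rule eq_matI) (auto simp: di_def dm_def cc_nz)


lemma LU_block:
  assumes a: "a < k" and c: "c < k" and r: "r < d" and u: "u < d"
  shows "Fo d X a c $$ (r,u) = (\<Sum>b<k. (Lf a b * Uf b c) $$ (r,u))"
proof -
  have "(\<Sum>b<k. (Lf a b * Uf b c) $$ (r,u)) = (Lf a a * Uf a c) $$ (r,u)
      + (if a > 0 then (Lf a (a-1) * Uf (a-1) c) $$ (r,u) else 0)"
    by (rule sum_two[OF a]) (simp add: Lf_def r u left_mult_zero_mat[OF Uf_carrier])
  also have "Lf a a * Uf a c = Uf a c"
    using left_mult_one_mat[OF Uf_carrier[of a c]] by (simp add: Lf_def)
  finally have S: "(\<Sum>b<k. (Lf a b * Uf b c) $$ (r,u)) = Uf a c $$ (r,u)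
      + (if a > 0 then (Lf a (a-1) * Uf (a-1) c) $$ (r,u) else 0)" .
  have L1: "a > 0 \<Longrightarrow> Lf a (a-1) = - (Bm * dg d (di (a-1)))" by (auto simp add: Lf_def)
  consider (eq) "c = a" | (up) "c = a+1" | (lo) "a = c+1" | (far) "c \<noteq> a" "c \<noteq> a+1" "a \<noteq> c+1"
    by blast
  then show ?thesis
  proof cases
    case eq
    show ?thesis
    proof (cases "a > 0")
      case False
      then show ?thesis using S eq r u by (simp add: Uf_def Fo_def dm_def cc_0)
    next
      case True
      have U2: "Uf (a-1) a = - Am" using True by (auto simp add: Uf_def)
      have "Lf a (a-1) * Uf (a-1) c = (- (Bm * dg d (di (a-1)))) * (- Am)"
        using eq by (simp only: L1[OF True] U2)
      also have "\<dots> = (Bm * dg d (di (a-1))) * Am"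
        using uminus_mult_left_mat[of "Bm * dg d (di (a-1))" "- Am"] uminus_mult_right_mat[of "Bm * dg d (di (a-1))" Am]
        by (simp add: carrier_matD[OF Am_carrier])
      also have "\<dots> = dg d (\<lambda>i. (1 - \<delta> i) * di (a-1) i)" by (rule BDA)
      finally have P: "Lf a (a-1) * Uf (a-1) c = dg d (\<lambda>i. (1 - \<delta> i) * di (a-1) i)" .
      have "dm a r + (1 - \<delta> r) * di (a-1) r = 2"
        using d01[OF r] cc_rec[OF True] by (auto simp: dm_def di_def)
      moreover have Ua: "Uf a c = dg d (dm a)" using eq by (simp add: Uf_def)
      ultimately show ?thesis unfolding S P Ua using eq r u True by (auto simp add: Fo_def)
    qed
  next
    case up
    have "a > 0 \<Longrightarrow> Uf (a-1) c = 0\<^sub>m d d" using up by (auto simp add: Uf_def)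
    then have Z: "a > 0 \<Longrightarrow> (Lf a (a-1) * Uf (a-1) c) $$ (r,u) = 0"
      using r u right_mult_zero_mat[OF Lf_carrier[of a "a-1"], of d] by simp
    show ?thesis using S Z up r u X by (simp add: Uf_def Fo_def Am_def)
  next
    case lo
    then have ap: "a > 0" and c': "c = a - 1" by auto
    have "Lf a (a-1) * Uf (a-1) c = (- (Bm * dg d (di (a-1)))) * dg d (dm (a-1))"
      using c' by (simp only: L1[OF ap] Uf_def if_True refl)
    also have "\<dots> = - (Bm * dg d (di (a-1)) * dg d (dm (a-1)))"
      by (rule uminus_mult_left_mat) simp
    also have "Bm * dg d (di (a-1)) * dg d (dm (a-1)) = Bm * (dg d (di (a-1)) * dg d (dm (a-1)))"
      by (rule assoc_mult_mat[OF Bm_carrier dg_carrier dg_carrier])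
    also have "\<dots> = Bm" unfolding DiD by (rule right_mult_one_mat[OF Bm_carrier])
    finally have P: "Lf a (a-1) * Uf (a-1) c = - Bm" .
    have U0: "Uf a c = 0\<^sub>m d d" using lo by (auto simp add: Uf_def)
    show ?thesis unfolding S P U0 using ap r u X lo by (auto simp add: Fo_def Bm_def)
  next
    case far
    have U0: "Uf a c = 0\<^sub>m d d" using far by (auto simp add: Uf_def)
    have "a > 0 \<Longrightarrow> Uf (a-1) c = 0\<^sub>m d d" using far by (auto simp add: Uf_def)
    then have Z: "a > 0 \<Longrightarrow> (Lf a (a-1) * Uf (a-1) c) $$ (r,u) = 0"
      using r u right_mult_zero_mat[OF Lf_carrier[of a "a-1"], of d] by simp
    show ?thesis using S Z far r u by (simp add: U0 Fo_def)
  qed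
qed

lemma blk_LU: "blk k d (Fo d X) = blk k d Lf * blk k d Uf"
  by (rule blk_mult[symmetric]) (auto simp: LU_block)

lemma idx_lt:
  fixes i j e :: nat
  assumes "i < j"
  shows "i div e < j div e \<or> (i div e = j div e \<and> i mod e \<noteq> j mod e)"
proof -
  have "i div e \<le> j div e" using assms by (simp add: div_le_mono)
  moreover have "i div e = j div e \<Longrightarrow> i mod e = j mod e \<Longrightarrow> False"
    using assms by (metis div_mult_mod_eq less_irrefl)
  ultimately show ?thesis by (cases "i div e = j div e") auto
qed

lemma det_L: "det (blk k d Lf) = 1"
proof -
  have d: "i < k*d \<Longrightarrow> i mod d < d" for i by (cases "d = 0") auto
  have "det (blk k d Lf) = prod_list (diag_mat (blk k d Lf))"
  proof (rule det_lower_triangular[OF _ blk_carrier])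
    fix i j assume ij: "i < j" and j: "j < k*d"
    then have i: "i < k*d" by simp
    from idx_lt[OF ij, of d] show "blk k d Lf $$ (i,j) = 0"
      using d[OF i] d[OF j] by (auto simp: blk_index[OF i j] Lf_def)
  qed
  also have "\<dots> = (\<Prod>i = 0..<k*d. blk k d Lf $$ (i,i))" by (simp add: prod_list_diag_prod)
  also have "\<dots> = 1" by (rule prod.neutral) (auto simp: blk_index Lf_def d)
  finally show ?thesis .
qed

lemma prod_cc: "(\<Prod>a<k. cc a) = of_nat (k+1)"
proof (induction k)
  case 0 then show ?case by simp
next
  case (Suc k)
  have "(of_nat k + 1 :: complex) \<noteq> 0" by (rule of_nat_p_nz)
  then show ?case using Suc by (simp add: cc_def add.commute)
qed

lemma det_U: "det (blk k d Uf) = 2^(k * card {i. i<d \<and> \<delta> i = 1}) * of_nat (k+1)^(card {i. i<d \<and> \<delta> i \<noteq> 1})"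
proof -
  have d: "i < k*d \<Longrightarrow> i mod d < d" for i by (cases "d = 0") auto
  have "det (blk k d Uf) = prod_list (diag_mat (blk k d Uf))"
  proof (rule det_upper_triangular[OF _ blk_carrier])
    show "upper_triangular (blk k d Uf)"
    proof (rule upper_triangularI)
      fix i j assume ij: "j < i" and i: "i < dim_row (blk k d Uf)"
      then have i': "i < k*d" and j: "j < k*d" by auto
      from idx_lt[OF ij, of d] show "blk k d Uf $$ (i,j) = 0"
        using d[OF i'] d[OF j] by (auto simp: blk_index[OF i' j] Uf_def)
    qed
  qed
  also have "\<dots> = (\<Prod>i = 0..<k*d. blk k d Uf $$ (i,i))" by (simp add: prod_list_diag_prod)
  also have "\<dots> = (\<Prod>i<k*d. dm (i div d) (i mod d))"
    by (rule prod.cong) (auto simp: blk_index Uf_def d)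
  also have "\<dots> = (\<Prod>a<k. \<Prod>s<d. dm ((a*d+s) div d) ((a*d+s) mod d))" by (rule prod_blocks)
  also have "\<dots> = (\<Prod>a<k. \<Prod>s<d. dm a s)"
    by (intro prod.cong refl) auto
  also have "\<dots> = (\<Prod>a<k. 2^(card {i. i<d \<and> \<delta> i = 1}) * cc a^(card {i. i<d \<and> \<delta> i \<noteq> 1}))"
  proof (rule prod.cong[OF refl])
    fix a
    have "(\<Prod>s<d. dm a s) = (\<Prod>s\<in>{..<d} \<inter> {x. \<delta> x = 1}. 2) * (\<Prod>s\<in>{..<d} \<inter> - {x. \<delta> x = 1}. cc a)"
      unfolding dm_def by (rule prod.If_cases) simp
    also have "{..<d} \<inter> {x. \<delta> x = 1} = {i. i<d \<and> \<delta> i = 1}" by auto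
    also have "{..<d} \<inter> - {x. \<delta> x = 1} = {i. i<d \<and> \<delta> i \<noteq> 1}" by auto
    finally show "(\<Prod>s<d. dm a s) = 2^(card {i. i<d \<and> \<delta> i = 1}) * cc a^(card {i. i<d \<and> \<delta> i \<noteq> 1})"
      by simp
  qed
  also have "\<dots> = 2^(k * card {i. i<d \<and> \<delta> i = 1}) * (\<Prod>a<k. cc a)^(card {i. i<d \<and> \<delta> i \<noteq> 1})"
  proof -
    have "(\<Prod>a<k. 2^(card {i. i<d \<and> \<delta> i = 1}) * cc a^(card {i. i<d \<and> \<delta> i \<noteq> 1}))
       = (\<Prod>a<k. 2^(card {i. i<d \<and> \<delta> i = 1})) * (\<Prod>a<k. cc a^(card {i. i<d \<and> \<delta> i \<noteq> 1}))"
      by (rule prod.distrib)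
    also have "(\<Prod>a<k. (2::complex)^(card {i. i<d \<and> \<delta> i = 1})) = 2^(k * card {i. i<d \<and> \<delta> i = 1})"
      by (simp add: power_mult[symmetric] mult.commute)
    also have "(\<Prod>a<k. cc a^(card {i. i<d \<and> \<delta> i \<noteq> 1})) = (\<Prod>a<k. cc a)^(card {i. i<d \<and> \<delta> i \<noteq> 1})"
      by (simp add: prod_power_distrib)
    finally show ?thesis .
  qed
  also have "\<dots> = 2^(k * card {i. i<d \<and> \<delta> i = 1}) * of_nat (k+1)^(card {i. i<d \<and> \<delta> i \<noteq> 1})"
    by (simp only: prod_cc)
  finally show ?thesis .
qed

lemma det_blk_Fo: "det (blk k d (Fo d X)) = 2^(k * card {i. i<d \<and> \<delta> i = 1}) * of_nat (k+1)^(card {i. i<d \<and> \<delta> i \<noteq> 1})"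
  unfolding blk_LU det_mult[OF blk_carrier blk_carrier] det_L det_U by simp

end

lemma sum_one:
  assumes a: "a < (k::nat)" and z: "\<And>b. b < k \<Longrightarrow> b \<noteq> a \<Longrightarrow> g b = (0::complex)"
  shows "(\<Sum>b<k. g b) = g a"
proof -
  have "(\<Sum>b<k. g b) = g a + (\<Sum>b\<in>{..<k}-{a}. g b)"
    using a by (simp add: sum.remove)
  also have "(\<Sum>b\<in>{..<k}-{a}. g b) = 0" by (intro sum.neutral ballI z) auto
  finally show ?thesis by simp
qed

lemma O_mat_blk:
  assumes W: "W \<in> carrier_mat d d"
  shows "O_mat m W = blk (m-1) d (Fo d (map_mat complex_of_real W))"
proof (rule eq_matI)
  fix i j assume "i < dim_row (blk (m-1) d (Fo d (map_mat complex_of_real W)))"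
     "j < dim_col (blk (m-1) d (Fo d (map_mat complex_of_real W)))"
  then have i: "i < (m-1)*d" and j: "j < (m-1)*d" by auto
  then have dp: "d > 0" by (cases d) auto
  have r: "i mod d < d" "j mod d < d" using dp by auto
  show "O_mat m W $$ (i,j) = blk (m-1) d (Fo d (map_mat complex_of_real W)) $$ (i,j)"
    using i j r W unfolding O_mat_def blk_index[OF i j]
    by (auto simp: Let_def Fo_def)
qed (use W in \<open>auto simp: O_mat_def\<close>)

lemma Fo_lin: "X \<in> carrier_mat d d \<Longrightarrow> Fo d X a b =
   (if a = b then 2 else if b = a+1 then -1 else if a = b+1 then -1 else 0) \<cdot>\<^sub>m 1\<^sub>m d
   + (if a = b then 0 else if b = a+1 then - \<i> else if a = b+1 then \<i> else 0) \<cdot>\<^sub>m X"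
  by (rule eq_matI) (auto simp: Fo_def)

lemma sandwich_lin:
  fixes X C C' :: "complex mat"
  assumes X: "X \<in> carrier_mat d d" and C: "C \<in> carrier_mat d d" and C': "C' \<in> carrier_mat d d"
    and CC: "C' * C = 1\<^sub>m d"
  shows "C' * (\<alpha> \<cdot>\<^sub>m 1\<^sub>m d + \<beta> \<cdot>\<^sub>m X) * C = \<alpha> \<cdot>\<^sub>m 1\<^sub>m d + \<beta> \<cdot>\<^sub>m (C' * X * C)"
proof -
  have "C' * (\<alpha> \<cdot>\<^sub>m 1\<^sub>m d + \<beta> \<cdot>\<^sub>m X) = C' * (\<alpha> \<cdot>\<^sub>m 1\<^sub>m d) + C' * (\<beta> \<cdot>\<^sub>m X)"
    by (rule mult_add_distrib_mat[of _ d d]) (use X C' in auto)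
  also have "C' * (\<alpha> \<cdot>\<^sub>m 1\<^sub>m d) = \<alpha> \<cdot>\<^sub>m C'"
    using mult_smult_distrib[of C' d d "1\<^sub>m d" d \<alpha>] C' by simp
  also have "C' * (\<beta> \<cdot>\<^sub>m X) = \<beta> \<cdot>\<^sub>m (C' * X)"
    by (rule mult_smult_distrib[OF C' X])
  finally have 1: "C' * (\<alpha> \<cdot>\<^sub>m 1\<^sub>m d + \<beta> \<cdot>\<^sub>m X) = \<alpha> \<cdot>\<^sub>m C' + \<beta> \<cdot>\<^sub>m (C' * X)" .
  have "(\<alpha> \<cdot>\<^sub>m C' + \<beta> \<cdot>\<^sub>m (C' * X)) * C = (\<alpha> \<cdot>\<^sub>m C') * C + (\<beta> \<cdot>\<^sub>m (C' * X)) * C"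
    by (rule add_mult_distrib_mat[of _ d d]) (use X C C' in auto)
  also have "(\<alpha> \<cdot>\<^sub>m C') * C = \<alpha> \<cdot>\<^sub>m 1\<^sub>m d"
    using mult_smult_assoc_mat[OF C' C, of \<alpha>] CC by simp
  also have "(\<beta> \<cdot>\<^sub>m (C' * X)) * C = \<beta> \<cdot>\<^sub>m (C' * X * C)"
    by (rule mult_smult_assoc_mat) (use X C C' in auto)
  finally show ?thesis unfolding 1 .
qed

definition bd :: "nat \<Rightarrow> nat \<Rightarrow> complex mat \<Rightarrow> complex mat" where
  "bd k d C = blk k d (\<lambda>a b. if a = b then C else 0\<^sub>m d d)"

lemma bd_mult_left:
  assumes C: "C \<in> carrier_mat d d" and G: "\<And>a b. G a b \<in> carrier_mat d d"
  shows "bd k d C * blk k d G = blk k d (\<lambda>a b. C * G a b)"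
  unfolding bd_def
proof (rule blk_mult)
  fix a c r u assume a: "a < k" and c: "c < k" and r: "r < d" and u: "u < d"
  have "(\<Sum>b<k. ((if a = b then C else 0\<^sub>m d d) * G b c) $$ (r,u)) = ((if a = a then C else 0\<^sub>m d d) * G a c) $$ (r,u)"
    by (rule sum_one[OF a]) (use r u G in \<open>auto simp: left_mult_zero_mat[OF G]\<close>)
  then show "(C * G a c) $$ (r,u) = (\<Sum>b<k. ((if a = b then C else 0\<^sub>m d d) * G b c) $$ (r,u))"
    by simp
qed (use C G in auto)

lemma bd_mult_right:
  assumes C: "C \<in> carrier_mat d d" and G: "\<And>a b. G a b \<in> carrier_mat d d"
  shows "blk k d G * bd k d C = blk k d (\<lambda>a b. G a b * C)"
  unfolding bd_def
proof (rule blk_mult)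
  fix a c r u assume a: "a < k" and c: "c < k" and r: "r < d" and u: "u < d"
  have "(\<Sum>b<k. (G a b * (if b = c then C else 0\<^sub>m d d)) $$ (r,u)) = (G a c * (if c = c then C else 0\<^sub>m d d)) $$ (r,u)"
    by (rule sum_one[OF c]) (use r u G in \<open>auto simp: right_mult_zero_mat[OF G]\<close>)
  then show "(G a c * C) $$ (r,u) = (\<Sum>b<k. (G a b * (if b = c then C else 0\<^sub>m d d)) $$ (r,u))"
    by simp
qed (use C G in auto)

lemma blk_one: "blk k d (\<lambda>a b. if a = b then 1\<^sub>m d else 0\<^sub>m d d) = 1\<^sub>m (k*d)"
proof (rule eq_matI)
  fix i j assume "i < dim_row (1\<^sub>m (k*d))" "j < dim_col (1\<^sub>m (k*d))"
  then have i: "i < k*d" and j: "j < k*d" by auto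
  then have dp: "d > 0" by (cases d) auto
  have "i = j \<longleftrightarrow> i div d = j div d \<and> i mod d = j mod d"
    by (metis div_mult_mod_eq)
  then show "blk k d (\<lambda>a b. if a = b then 1\<^sub>m d else 0\<^sub>m d d) $$ (i,j) = 1\<^sub>m (k*d) $$ (i,j)"
    using i j dp by (auto simp: blk_index)
qed auto

lemma det_sim:
  assumes X: "X \<in> carrier_mat d d" and C: "C \<in> carrier_mat d d" and C': "C' \<in> carrier_mat d d"
    and CC: "C' * C = 1\<^sub>m d" and CC2: "C * C' = 1\<^sub>m d"
  shows "det (blk k d (Fo d (C' * X * C))) = det (blk k d (Fo d X))"
proof -
  have XC: "C' * X * C \<in> carrier_mat d d" using X C C' by auto
  have "bd k d C' * blk k d (Fo d X) = blk k d (\<lambda>a b. C' * Fo d X a b)"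
    by (rule bd_mult_left[OF C']) (use X in auto)
  then have "bd k d C' * blk k d (Fo d X) * bd k d C = blk k d (\<lambda>a b. C' * Fo d X a b * C)"
    using bd_mult_right[OF C, of "\<lambda>a b. C' * Fo d X a b" k] C' X by simp
  also have "(\<lambda>a b. C' * Fo d X a b * C) = Fo d (C' * X * C)"
    by (intro ext) (simp only: Fo_lin[OF X] Fo_lin[OF XC] sandwich_lin[OF X C C' CC])
  finally have E: "bd k d C' * blk k d (Fo d X) * bd k d C = blk k d (Fo d (C' * X * C))" .
  have "bd k d C' * bd k d C = blk k d (\<lambda>a b. C' * (if a = b then C else 0\<^sub>m d d))"
    unfolding bd_def[of k d C] by (rule bd_mult_left[OF C']) (use C in auto)
  also have "\<dots> = blk k d (\<lambda>a b. if a = b then 1\<^sub>m d else 0\<^sub>m d d)"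
    using CC C' by (intro arg_cong[where f="blk k d"] ext) auto
  finally have "bd k d C' * bd k d C = 1\<^sub>m (k*d)" by (simp add: blk_one)
  then have "det (bd k d C') * det (bd k d C) = 1"
    by (metis det_mult[OF blk_carrier blk_carrier] bd_def det_one)
  moreover have "det (blk k d (Fo d (C' * X * C))) = det (bd k d C') * det (blk k d (Fo d X)) * det (bd k d C)"
  proof -
    have "det (bd k d C' * blk k d (Fo d X) * bd k d C) = det (bd k d C' * blk k d (Fo d X)) * det (bd k d C)"
      unfolding bd_def by (rule det_mult[OF mult_carrier_mat[OF blk_carrier blk_carrier] blk_carrier])
    also have "det (bd k d C' * blk k d (Fo d X)) = det (bd k d C') * det (blk k d (Fo d X))"
      unfolding bd_def by (rule det_mult[OF blk_carrier blk_carrier])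
    finally show ?thesis unfolding E .
  qed
  ultimately show ?thesis by (simp add: algebra_simps)
qed

lemma det_O_final:
  fixes W Cr :: "real mat" and \<delta>r :: "nat \<Rightarrow> real"
  assumes W: "W \<in> carrier_mat d d" and Cr: "Cr \<in> carrier_mat d d" and dC: "det Cr \<noteq> 0"
    and WWC: "\<And>i j. i < d \<Longrightarrow> j < d \<Longrightarrow> (W * (W * Cr)) $$ (i,j) = - \<delta>r j * Cr $$ (i,j)"
    and d01: "\<And>j. j < d \<Longrightarrow> \<delta>r j = 0 \<or> \<delta>r j = 1" and m: "m \<ge> 1"
  shows "det (O_mat m W) = 2^((m-1) * card {j. j<d \<and> \<delta>r j = 1}) * of_nat m ^ card {j. j<d \<and> \<delta>r j \<noteq> 1}"
proof -
  define Wc where "Wc = map_mat complex_of_real W"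
  define Cc where "Cc = map_mat complex_of_real Cr"
  define \<delta> where "\<delta> = (\<lambda>j. complex_of_real (\<delta>r j))"
  have Wc: "Wc \<in> carrier_mat d d" and Cc: "Cc \<in> carrier_mat d d" using W Cr by (auto simp: Wc_def Cc_def)
  have "det Cc = of_real (det Cr)" unfolding Cc_def by (rule of_real_hom.hom_det)
  then have dCc: "det Cc \<noteq> 0" using dC by simp
  let ?R = "ring_mat TYPE(complex) d ()"
  from det_non_zero_imp_unit[OF Cc dCc, of "()"] have "Cc \<in> Units ?R" .
  then obtain Cc' where Cc': "Cc' \<in> carrier_mat d d" and inv1: "Cc' * Cc = 1\<^sub>m d" and inv2: "Cc * Cc' = 1\<^sub>m d"
    unfolding Units_def ring_mat_def by auto
  have hom: "map_mat complex_of_real (W * (W * Cr)) = Wc * (Wc * Cc)"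
    unfolding Wc_def Cc_def
    by (simp only: of_real_hom.mat_hom_mult[OF W mult_carrier_mat[OF W Cr]] of_real_hom.mat_hom_mult[OF W Cr])
  have M: "- (Wc * (Wc * Cc)) = Cc * dg d \<delta>"
  proof (rule eq_matI)
    fix i j assume "i < dim_row (Cc * dg d \<delta>)" "j < dim_col (Cc * dg d \<delta>)"
    then have i: "i < d" and j: "j < d" using Cc by auto
    have "(- (Wc * (Wc * Cc))) $$ (i,j) = - complex_of_real ((W * (W * Cr)) $$ (i,j))"
      unfolding hom[symmetric] using i j W Cr by simp
    also have "\<dots> = Cc $$ (i,j) * \<delta> j" using WWC[OF i j] i j Cr by (simp add: Cc_def \<delta>_def)
    also have "\<dots> = (Cc * dg d \<delta>) $$ (i,j)" by (rule dg_mult_right[OF Cc i j, symmetric])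
    finally show "(- (Wc * (Wc * Cc))) $$ (i,j) = (Cc * dg d \<delta>) $$ (i,j)" .
  qed (use Wc Cc in auto)
  define Y where "Y = Cc' * Wc"
  have Y: "Y \<in> carrier_mat d d" using Cc' Wc by (simp add: Y_def)
  define X where "X = Y * Cc"
  have X: "X \<in> carrier_mat d d" using Y Cc by (simp add: X_def)
  have CY: "Cc * Y = Wc"
    unfolding Y_def using assoc_mult_mat[OF Cc Cc' Wc, symmetric] inv2 Wc by simp
  have "X * X = Y * (Cc * (Y * Cc))" unfolding X_def by (rule assoc_mult_mat[OF Y Cc mult_carrier_mat[OF Y Cc]])
  also have "Cc * (Y * Cc) = Wc * Cc" using assoc_mult_mat[OF Cc Y Cc, symmetric] CY by simp
  also have "Y * (Wc * Cc) = Cc' * (Wc * (Wc * Cc))"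
    unfolding Y_def by (rule assoc_mult_mat[OF Cc' Wc mult_carrier_mat[OF Wc Cc]])
  finally have XX0: "X * X = Cc' * (Wc * (Wc * Cc))" .
  have "- (X * X) = Cc' * (- (Wc * (Wc * Cc)))"
    unfolding XX0 by (rule uminus_mult_right_mat[symmetric]) (use Cc' Wc Cc in auto)
  also have "\<dots> = (Cc' * Cc) * dg d \<delta>" unfolding M by (rule assoc_mult_mat[OF Cc' Cc dg_carrier, symmetric])
  also have "\<dots> = dg d \<delta>" unfolding inv1 by simp
  finally have XX: "- (X * X) = dg d \<delta>" .
  interpret luctx d X \<delta>
    by unfold_locales (use X XX d01 in \<open>auto simp: \<delta>_def\<close>)
  have "det (O_mat m W) = det (blk (m-1) d (Fo d Wc))" unfolding O_mat_blk[OF W] Wc_def ..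
  also have "\<dots> = det (blk (m-1) d (Fo d X))"
    unfolding X_def Y_def by (rule det_sim[OF Wc Cc Cc' inv1 inv2, symmetric])
  also have "\<dots> = 2^((m-1) * card {i. i<d \<and> \<delta> i = 1}) * of_nat (m-1+1)^(card {i. i<d \<and> \<delta> i \<noteq> 1})"
    by (rule det_blk_Fo)
  also have "{i. i<d \<and> \<delta> i = 1} = {j. j<d \<and> \<delta>r j = 1}" by (auto simp: \<delta>_def)
  also have "{i. i<d \<and> \<delta> i \<noteq> 1} = {j. j<d \<and> \<delta>r j \<noteq> 1}" by (auto simp: \<delta>_def)
  also have "m - 1 + 1 = m" using m by simp
  finally show ?thesis .
qed

lemma inner_complex_cnj: "inner (x::complex) y = Re (x * cnj y)"
  by (simp add: inner_complex_def)

lemma inner_vec_complex: "inner (x::complex^'n) y = Re (\<Sum>j\<in>UNIV. x$j * cnj (y$j))"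
  by (simp add: inner_vec_def inner_complex_cnj Re_sum)

definition zf :: "complex^'n \<Rightarrow> complex^'n \<Rightarrow> complex" where
  "zf p x = (\<Sum>j\<in>UNIV. cnj (p$j) * x$j)"

lemma cnj_zf: "cnj (zf p y) = (\<Sum>k\<in>UNIV. p$k * cnj (y$k))"
  by (simp add: zf_def cnj_sum)

lemma bergman_riem_eq:
  "bergman_riem p x y = (1 / (1 - (norm p)^2)) * inner x y
     + (1 / (1 - (norm p)^2)^2) * Re (zf p x * cnj (zf p y))"
proof -
  define A where "A = complex_of_real (1 - (norm p)^2)"
  define C where "C = complex_of_real ((1 - (norm p)^2)^2)"
  have "(\<Sum>j\<in>UNIV. \<Sum>k\<in>UNIV. bergman_herm p j k * x $ j * cnj (y $ k))
     = (\<Sum>j\<in>UNIV. (1 / A) * (x$j * cnj (y$j))) + (\<Sum>j\<in>UNIV. \<Sum>k\<in>UNIV. (1/C) * ((cnj (p$j) * x$j) * (p$k * cnj (y$k))))"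
  proof -
    have "bergman_herm p j k * x $ j * cnj (y $ k) = (if k = j then (1 / A) * (x$j * cnj (y$j)) else 0)
        + (1/C) * ((cnj (p$j) * x$j) * (p$k * cnj (y$k)))" for j k
      unfolding bergman_herm_def A_def[symmetric] C_def[symmetric] by (auto simp: algebra_simps)
    then show ?thesis by (simp add: sum.distrib sum.delta)
  qed
  also have "(\<Sum>j\<in>UNIV. \<Sum>k\<in>UNIV. (1/C) * ((cnj (p$j) * x$j) * (p$k * cnj (y$k))))
      = (1/C) * (\<Sum>j\<in>UNIV. \<Sum>k\<in>UNIV. ((cnj (p$j) * x$j) * (p$k * cnj (y$k))))"
    by (simp add: sum_distrib_left)
  also have "(\<Sum>j\<in>UNIV. \<Sum>k\<in>UNIV. ((cnj (p$j) * x$j) * (p$k * cnj (y$k)))) = zf p x * cnj (zf p y)"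
    unfolding cnj_zf zf_def[of p x] by (rule sum_product[symmetric])
  also have "(\<Sum>j\<in>UNIV. (1 / A) * (x$j * cnj (y$j))) = (1/A) * (\<Sum>j\<in>UNIV. x$j * cnj (y$j))"
    by (simp add: sum_distrib_left)
  finally have "bergman_riem p x y = Re ((1/A) * (\<Sum>j\<in>UNIV. x$j * cnj (y$j)) + (1/C) * (zf p x * cnj (zf p y)))"
    unfolding bergman_riem_def by simp
  also have "\<dots> = (1 / (1 - (norm p)^2)) * inner x y + (1 / (1 - (norm p)^2)^2) * Re (zf p x * cnj (zf p y))"
    unfolding A_def C_def inner_vec_complex
    by (simp add: Re_divide_of_real del: of_real_power)
  finally show ?thesis .
qed

definition Mb :: "complex^'n \<Rightarrow> complex^'n \<Rightarrow> complex^'n" where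
  "Mb p y = (1 / (1 - (norm p)^2)) *\<^sub>R y + (1 / (1 - (norm p)^2)^2) *\<^sub>R (\<chi> j. p$j * zf p y)"

lemma Re_zf: "Re (zf p x * cnj (zf p y)) = inner x (\<chi> j. p$j * zf p y)"
proof -
  have "zf p x * cnj (zf p y) = (\<Sum>j\<in>UNIV. x$j * cnj (p$j * zf p y))"
    unfolding zf_def[of p x] sum_distrib_right by (rule sum.cong) (simp_all add: algebra_simps)
  then show ?thesis by (simp add: inner_vec_complex)
qed

lemma b_inner: "bergman_riem p x y = inner x (Mb p y)"
  unfolding bergman_riem_eq Mb_def Re_zf by (simp add: inner_add_right)

lemma b_sym: "bergman_riem p x y = bergman_riem p y x"
proof -
  have "Re (zf p x * cnj (zf p y)) = Re (zf p y * cnj (zf p x))"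
    by (simp add: mult.commute)
  then show ?thesis unfolding bergman_riem_eq by (simp add: inner_commute)
qed

lemma b_inner2: "bergman_riem p x y = inner (Mb p x) y"
  by (metis b_sym b_inner inner_commute)

lemma b_pos:
  assumes np: "norm p < 1" and x: "x \<noteq> 0"
  shows "bergman_riem p x x > 0"
proof -
  have a: "1 - (norm p)^2 > 0" using np norm_ge_zero[of p]
    by (metis abs_of_nonneg abs_square_less_1 diff_gt_0_iff_gt)
  have z: "Re (zf p x * cnj (zf p x)) \<ge> 0" by simp
  have "inner x x > 0" using x by simp
  then have "(1 / (1 - (norm p)^2)) * inner x x > 0" using a by simp
  moreover have "(1 / (1 - (norm p)^2)^2) * Re (zf p x * cnj (zf p x)) \<ge> 0" using a z by simp
  ultimately show ?thesis unfolding bergman_riem_eq by linarith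
qed

lemma Jcx_add: "Jcx (x + y) = Jcx x + Jcx y"
  by (simp add: Jcx_def Finite_Cartesian_Product.vec_eq_iff algebra_simps)
lemma Jcx_scaleR: "Jcx (r *\<^sub>R x) = r *\<^sub>R Jcx x"
  by (simp add: Jcx_def Finite_Cartesian_Product.vec_eq_iff)
lemma linear_Jcx: "linear Jcx"
  by (rule linearI) (simp_all add: Jcx_add Jcx_scaleR)
lemma Jcx_Jcx: "Jcx (Jcx x) = - x"
  by (simp add: Jcx_def Finite_Cartesian_Product.vec_eq_iff)
lemma inj_Jcx: "inj Jcx"
  by (metis Jcx_Jcx injI minus_equation_iff)

lemma zf_Jcx: "zf p (Jcx x) = \<i> * zf p x"
  by (simp add: zf_def Jcx_def sum_distrib_left algebra_simps)

lemma inner_Jcx: "inner (Jcx x) (Jcx y) = inner x y"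
proof -
  have "(\<i> * x$j) * cnj (\<i> * y$j) = x$j * cnj (y$j)" for j
    by (simp add: algebra_simps)
  then show ?thesis by (simp add: inner_vec_complex Jcx_def)
qed

lemma b_J: "bergman_riem p (Jcx x) (Jcx y) = bergman_riem p x y"
proof -
  have "(\<i> * zf p x) * cnj (\<i> * zf p y) = zf p x * cnj (zf p y)"
    by (simp add: algebra_simps)
  then show ?thesis unfolding bergman_riem_eq zf_Jcx inner_Jcx by simp
qed

lemma ce_bij: "bij_betw (coord_enum :: nat \<Rightarrow> 'd::finite) {..<CARD('d)} UNIV"
proof -
  have "\<exists>f. bij_betw f {..<CARD('d)} (UNIV::'d set)"
    using ex_bij_betw_nat_finite[of "UNIV::'d set"] by (auto simp: lessThan_atLeast0)
  then show ?thesis unfolding coord_enum_def by (rule someI_ex)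
qed

lemma b_sum_left: "bergman_riem p (\<Sum>j\<in>A. c j *\<^sub>R v j) w = (\<Sum>j\<in>A. c j * bergman_riem p (v j) w)"
  by (simp add: b_inner inner_sum_left)
lemma b_sum_right: "bergman_riem p w (\<Sum>j\<in>A. c j *\<^sub>R v j) = (\<Sum>j\<in>A. c j * bergman_riem p w (v j))"
  by (simp add: b_inner2 inner_sum_right)
lemma b_diff_right: "bergman_riem p w (x - y) = bergman_riem p w x - bergman_riem p w y"
  by (simp add: b_inner2 inner_diff_right)
lemma b_diff_left: "bergman_riem p (x - y) w = bergman_riem p x w - bergman_riem p y w"
  by (simp add: b_inner inner_diff_left)
lemma b_minus_right: "bergman_riem p w (- x) = - bergman_riem p w x"
  by (simp add: b_inner2)
lemma b_zero_right: "bergman_riem p w 0 = 0"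
  by (simp add: b_inner2)

locale geo =
  fixes p :: "complex^'n" and L :: "real^'d \<Rightarrow> complex^'n"
  assumes np: "norm p < 1" and lin: "linear L" and injL: "inj L"
begin

abbreviation "b \<equiv> bergman_riem p"

definition "e j = L (axis ((coord_enum :: nat \<Rightarrow> 'd) j) 1)"
definition "E (x :: real Matrix.vec) = (\<Sum>j<CARD('d). (x $ j) *\<^sub>R e j)"
definition "tov (x :: real Matrix.vec) = (\<Sum>j<CARD('d). (x $ j) *\<^sub>R axis ((coord_enum :: nat \<Rightarrow> 'd) j) (1::real))"
definition "coords (s :: real^'d) = Matrix.vec CARD('d) (\<lambda>j. s $ (coord_enum :: nat \<Rightarrow> 'd) j)"

lemma ce_inj: "j < CARD('d) \<Longrightarrow> k < CARD('d) \<Longrightarrow> (coord_enum :: nat \<Rightarrow> 'd) j = (coord_enum :: nat \<Rightarrow> 'd) k \<longleftrightarrow> j = k"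
  using ce_bij unfolding bij_betw_def inj_on_def by auto

lemma ce_surj: "\<exists>k<CARD('d). (coord_enum :: nat \<Rightarrow> 'd) k = i"
  using ce_bij unfolding bij_betw_def by (metis UNIV_I imageE lessThan_iff)

lemma E_eq: "E x = L (tov x)"
  unfolding E_def tov_def e_def by (simp add: linear_sum[OF lin] linear_scale[OF lin])

lemma tov_ce: assumes k: "k < CARD('d)" shows "tov x $ (coord_enum :: nat \<Rightarrow> 'd) k = x $ k"
proof -
  have "tov x $ (coord_enum :: nat \<Rightarrow> 'd) k = (\<Sum>j<CARD('d). x $ j * (axis ((coord_enum :: nat \<Rightarrow> 'd) j) (1::real) $ (coord_enum :: nat \<Rightarrow> 'd) k))"
    unfolding tov_def by (simp add: sum_component)
  also have "\<dots> = (\<Sum>j<CARD('d). if j = k then x $ k else 0)"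
    by (rule sum.cong) (auto simp: axis_def ce_inj k)
  also have "\<dots> = x $ k" using k by simp
  finally show ?thesis .
qed

lemma coords_carrier[simp]: "coords s \<in> carrier_vec CARD('d)" by (simp add: coords_def)

lemma tov_coords: "tov (coords s) = s"
proof -
  have "tov (coords s) $ i = s $ i" for i
  proof -
    obtain k where k: "k < CARD('d)" "(coord_enum :: nat \<Rightarrow> 'd) k = i" using ce_surj by blast
    show ?thesis using tov_ce[OF k(1)] k by (simp add: coords_def)
  qed
  then show ?thesis by (simp add: Finite_Cartesian_Product.vec_eq_iff)
qed

lemma E_coords: "E (coords s) = L s" by (simp add: E_eq tov_coords)

lemma E_range: "E x \<in> range L" by (simp add: E_eq)

lemma range_E: "v \<in> range L \<Longrightarrow> \<exists>x\<in>carrier_vec CARD('d). E x = v"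
  using E_coords coords_carrier by blast

lemma E_zero: assumes x: "x \<in> carrier_vec CARD('d)" and z: "E x = 0" shows "x = 0\<^sub>v CARD('d)"
proof -
  have "L (tov x) = L 0" using z lin by (simp add: E_eq linear_0)
  then have t: "tov x = 0" using injL by (simp add: inj_eq)
  show ?thesis
  proof (rule eq_vecI)
    fix k assume "k < dim_vec (0\<^sub>v CARD('d))"
    then have k: "k < CARD('d)" by simp
    show "x $ k = 0\<^sub>v CARD('d) $ k" using tov_ce[OF k, of x] t k by simp
  qed (use x in auto)
qed

lemma E_add: assumes "x \<in> carrier_vec CARD('d)" "y \<in> carrier_vec CARD('d)" shows "E (x + y) = E x + E y"
  unfolding E_def using assms by (simp add: scaleR_add_left sum.distrib)

lemma b_E_left: "b (E x) w = (\<Sum>j<CARD('d). x $ j * b (e j) w)"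
  unfolding E_def by (rule b_sum_left)
lemma b_E_right: "b w (E x) = (\<Sum>j<CARD('d). x $ j * b w (e j))"
  unfolding E_def by (rule b_sum_right)

lemma Jcx_E: "Jcx (E x) = (\<Sum>j<CARD('d). (x $ j) *\<^sub>R Jcx (e j))"
  unfolding E_def by (simp add: linear_sum[OF linear_Jcx] linear_scale[OF linear_Jcx])

definition "Gm = mat CARD('d) CARD('d) (\<lambda>(j,k). b (e j) (e k))"
definition "Hm = mat CARD('d) CARD('d) (\<lambda>(j,k). omega p (e j) (e k))"

lemma Gm_carrier[simp]: "Gm \<in> carrier_mat CARD('d) CARD('d)" by (simp add: Gm_def)
lemma Hm_carrier[simp]: "Hm \<in> carrier_mat CARD('d) CARD('d)" by (simp add: Hm_def)

lemma Gm_mult: assumes y: "y \<in> carrier_vec CARD('d)" and j: "j < CARD('d)"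
  shows "(Gm *\<^sub>v y) $ j = b (e j) (E y)"
  using y j by (simp add: Gm_def b_E_right scalar_prod_def lessThan_atLeast0 mult.commute)

lemma Hm_mult: assumes y: "y \<in> carrier_vec CARD('d)" and j: "j < CARD('d)"
  shows "(Hm *\<^sub>v y) $ j = b (e j) (Jcx (E y))"
  using y j by (simp add: Hm_def Jcx_E b_sum_right omega_def scalar_prod_def lessThan_atLeast0 mult.commute)

end

context geo begin

lemma b_E_self_zero: assumes x: "x \<in> carrier_vec CARD('d)" and z: "b (E x) (E x) = 0"
  shows "x = 0\<^sub>v CARD('d)"
proof -
  have "E x = 0" using b_pos[OF np] z by (metis less_irrefl)
  then show ?thesis by (rule E_zero[OF x])
qed

lemma det_Gm: "det Gm \<noteq> 0"
proof
  assume "det Gm = 0"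
  then obtain y where y: "y \<in> carrier_vec CARD('d)" "y \<noteq> 0\<^sub>v CARD('d)" "Gm *\<^sub>v y = 0\<^sub>v CARD('d)"
    using det_0_iff_vec_prod_zero_field[OF Gm_carrier] by auto
  have "\<And>j. j < CARD('d) \<Longrightarrow> b (e j) (E y) = 0"
    using Gm_mult[OF y(1)] y(3) by (metis index_zero_vec(1))
  then have "b (E y) (E y) = 0" by (simp add: b_E_left)
  then show False using b_E_self_zero[OF y(1)] y(2) by simp
qed

definition "Gi = the (mat_inverse Gm)"

lemma Gi: "Gi \<in> carrier_mat CARD('d) CARD('d)" "Gm * Gi = 1\<^sub>m CARD('d)" "Gi * Gm = 1\<^sub>m CARD('d)"
proof -
  have U: "Gm \<in> Units (ring_mat TYPE(real) CARD('d) ())"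
    by (rule det_non_zero_imp_unit[OF Gm_carrier det_Gm])
  obtain B where B: "mat_inverse Gm = Some B"
  proof (cases "mat_inverse Gm")
    case None
    then have "Gm \<notin> Units (ring_mat TYPE(real) CARD('d) ())" by (rule mat_inverse(1)[OF Gm_carrier])
    with U show ?thesis by simp
  qed
  from mat_inverse(2)[OF Gm_carrier B] B show "Gi \<in> carrier_mat CARD('d) CARD('d)" "Gm * Gi = 1\<^sub>m CARD('d)" "Gi * Gm = 1\<^sub>m CARD('d)"
    by (auto simp: Gi_def)
qed

definition "Wm = Gi * Hm"

lemma Wm_carrier[simp]: "Wm \<in> carrier_mat CARD('d) CARD('d)"
  using Gi by (simp add: Wm_def)

lemma GW: "Gm * Wm = Hm"
proof -
  have "Gm * Wm = (Gm * Gi) * Hm" unfolding Wm_def by (rule assoc_mult_mat[OF Gm_carrier Gi(1) Hm_carrier, symmetric])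
  then show ?thesis using Gi(2) left_mult_one_mat[OF Hm_carrier] by simp
qed

lemma W_key: assumes x: "x \<in> carrier_vec CARD('d)" and j: "j < CARD('d)"
  shows "b (e j) (E (Wm *\<^sub>v x)) = b (e j) (Jcx (E x))"
proof -
  have "Gm *\<^sub>v (Wm *\<^sub>v x) = Hm *\<^sub>v x"
    using assoc_mult_mat_vec[OF Gm_carrier Wm_carrier x] GW by simp
  then have "(Gm *\<^sub>v (Wm *\<^sub>v x)) $ j = (Hm *\<^sub>v x) $ j" by simp
  then show ?thesis using Gm_mult[OF mult_mat_vec_carrier[OF Wm_carrier x] j] Hm_mult[OF x j] by simp
qed

lemma W_perp: assumes x: "x \<in> carrier_vec CARD('d)" and v: "v \<in> range L"
  shows "b v (E (Wm *\<^sub>v x) - Jcx (E x)) = 0"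
proof -
  obtain c where c: "c \<in> carrier_vec CARD('d)" "E c = v" using range_E[OF v] by blast
  show ?thesis unfolding c(2)[symmetric] b_E_left
    by (simp add: b_diff_right W_key[OF x])
qed

lemma subspace_V: "subspace (range L)"
  by (rule linear_subspace_image[OF lin subspace_UNIV])

lemma b_perp_zero: assumes u: "u \<in> range L" and perp: "\<And>v. v \<in> range L \<Longrightarrow> b v u = 0"
  shows "u = 0"
  using perp[OF u] b_pos[OF np, of u] by (cases "u = 0") auto

lemma W_zero: assumes x: "x \<in> carrier_vec CARD('d)" and S: "E x \<in> sympl_compl p (range L)"
  shows "Wm *\<^sub>v x = 0\<^sub>v CARD('d)"
proof -
  let ?y = "Wm *\<^sub>v x"
  have y: "?y \<in> carrier_vec CARD('d)" by (rule mult_mat_vec_carrier[OF Wm_carrier x])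
  have "b v (E ?y) = 0" if v: "v \<in> range L" for v
  proof -
    have "b v (Jcx (E x)) = b (Jcx v) (Jcx (Jcx (E x)))" by (simp add: b_J)
    also have "\<dots> = - b (Jcx v) (E x)" by (simp add: Jcx_Jcx b_minus_right)
    also have "b (Jcx v) (E x) = omega p (E x) v" by (simp add: omega_def b_sym)
    also have "omega p (E x) v = 0" using S v unfolding sympl_compl_def by blast
    finally have "b v (Jcx (E x)) = 0" by simp
    then show ?thesis using W_perp[OF x v] by (simp add: b_diff_right)
  qed
  then have "E ?y = 0" by (intro b_perp_zero) (simp_all add: E_range)
  then show ?thesis by (rule E_zero[OF y])
qed

lemma Jcx_range: "Jcx u \<in> range L \<Longrightarrow> u \<in> range L \<Longrightarrow> True" by simp

lemma W_step: assumes x: "x \<in> carrier_vec CARD('d)" and J: "Jcx (E x) \<in> range L"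
  shows "E (Wm *\<^sub>v x) = Jcx (E x)"
proof -
  let ?y = "Wm *\<^sub>v x"
  have u: "E ?y - Jcx (E x) \<in> range L"
    using subspace_diff[OF subspace_V E_range J] .
  have "b v (E ?y - Jcx (E x)) = 0" if "v \<in> range L" for v using W_perp[OF x that] .
  then have "E ?y - Jcx (E x) = 0" by (rule b_perp_zero[OF u])
  then show ?thesis by simp
qed

lemma W_sq: assumes x: "x \<in> carrier_vec CARD('d)" and J: "Jcx (E x) \<in> range L"
  shows "Wm *\<^sub>v (Wm *\<^sub>v x) = - x"
proof -
  let ?y = "Wm *\<^sub>v x" let ?z = "Wm *\<^sub>v ?y"
  have y: "?y \<in> carrier_vec CARD('d)" by (rule mult_mat_vec_carrier[OF Wm_carrier x])
  have z: "?z \<in> carrier_vec CARD('d)" by (rule mult_mat_vec_carrier[OF Wm_carrier y])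
  have Ey: "E ?y = Jcx (E x)" by (rule W_step[OF x J])
  have "Jcx (E ?y) = - E x" unfolding Ey by (rule Jcx_Jcx)
  then have J2: "Jcx (E ?y) \<in> range L" using subspace_neg[OF subspace_V E_range] by simp
  have Ez: "E ?z = - E x" using W_step[OF y J2] Ey Jcx_Jcx by simp
  have "E (?z + x) = 0" using E_add[OF z x] Ez by simp
  then have "?z + x = 0\<^sub>v CARD('d)" by (rule E_zero[OF add_carrier_vec[OF z x]])
  then show ?thesis
  proof (intro eq_vecI)
    fix i assume "i < dim_vec (- x)"
    then have i: "i < CARD('d)" using x by simp
    have "(?z + x) $ i = 0" using \<open>?z + x = 0\<^sub>v CARD('d)\<close> i by simp
    then show "?z $ i = (- x) $ i" using i z x by simp
  qed (use z x carrier_matD[OF Wm_carrier] in simp)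
qed

end

lemma scaleR_comp: "(r *\<^sub>R x) $ j = complex_of_real r * (x $ j :: complex)"
  by (simp only: vector_scaleR_component) (simp add: scaleR_conv_of_real)

lemma zf_add: "zf p (x + y) = zf p x + zf p y"
  by (simp add: zf_def algebra_simps sum.distrib)
lemma zf_scaleR: "zf p (r *\<^sub>R x) = of_real r * zf p x"
  unfolding zf_def sum_distrib_left by (rule sum.cong) (simp_all only: scaleR_comp mult.left_commute)

lemma linear_Mb: "linear (Mb p)"
proof (rule linearI)
  fix x y and r :: real
  show "Mb p (x + y) = Mb p x + Mb p y"
    unfolding Mb_def zf_add by (simp add: Finite_Cartesian_Product.vec_eq_iff algebra_simps)
  show "Mb p (r *\<^sub>R x) = r *\<^sub>R Mb p x"
    unfolding Mb_def zf_scaleR Finite_Cartesian_Product.vec_eq_iff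
    by (simp only: vector_add_component scaleR_comp vec_lambda_beta) (simp add: algebra_simps)
qed

lemma omega_inner: "omega p x v = inner (Mb p (Jcx v)) x"
  by (simp add: omega_def b_inner inner_commute)

context geo begin

lemma dim_V: "dim (range L) = CARD('d)"
proof -
  have "dim (L ` UNIV) = dim (UNIV :: (real^'d) set)"
    by (rule dim_image_eq[OF lin]) (use injL in \<open>auto intro: inj_on_subset\<close>)
  then show ?thesis by simp
qed

lemma dim_JV: "dim (Jcx ` range L) = CARD('d)"
proof -
  have "dim (Jcx ` range L) = dim (range L)"
    by (rule dim_image_eq[OF linear_Jcx]) (use inj_Jcx in \<open>auto intro: inj_on_subset\<close>)
  then show ?thesis using dim_V by simp
qed

lemma subspace_JV: "subspace (Jcx ` range L)"
  by (rule linear_subspace_image[OF linear_Jcx subspace_V])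

lemma dim_ambient: "dim (UNIV :: (complex^'n) set) = 2 * CARD('n)"
  by simp

lemma S1_eq: "sympl_compl p (range L) = {y. \<forall>x\<in>(\<lambda>v. Mb p (Jcx v)) ` range L. real_inner_class.orthogonal x y}"
  unfolding sympl_compl_def real_inner_class.orthogonal_def by (auto simp: omega_inner)

lemma lin_MJ: "linear (\<lambda>v. Mb p (Jcx v))"
  using linear_compose[OF linear_Jcx linear_Mb] by (simp add: o_def)

lemma inj_MJ: "inj (\<lambda>v. Mb p (Jcx v))"
proof -
  have "v = 0" if "Mb p (Jcx v) = 0" for v
  proof -
    have "bergman_riem p (Jcx v) (Jcx v) = 0" using that by (simp add: b_inner)
    then have "Jcx v = 0" using b_pos[OF np] by (metis less_irrefl)
    then show "v = 0" using inj_Jcx linear_0[OF linear_Jcx] by (metis injD)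
  qed
  then show ?thesis using linear_inj_iff_eq_0[OF lin_MJ] by blast
qed

lemma dim_S1: "dim (sympl_compl p (range L)) + CARD('d) = 2 * CARD('n)"
proof -
  let ?A = "(\<lambda>v. Mb p (Jcx v)) ` range L"
  have sA: "subspace ?A" by (rule linear_subspace_image[OF lin_MJ subspace_V])
  have dA: "dim ?A = CARD('d)"
  proof -
    have "dim ?A = dim (range L)"
      by (rule dim_image_eq[OF lin_MJ]) (use inj_MJ in \<open>auto intro: inj_on_subset\<close>)
    then show ?thesis using dim_V by simp
  qed
  have "dim {y \<in> UNIV. \<forall>x \<in> ?A. real_inner_class.orthogonal x y} + dim ?A = dim (UNIV :: (complex^'n) set)"
    by (rule dim_subspace_orthogonal_to_vectors[OF sA subspace_UNIV]) simp
  then show ?thesis unfolding S1_eq dA by simp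
qed

lemma subspace_S1: "subspace (sympl_compl p (range L))"
  unfolding S1_eq real_inner_class.orthogonal_def
  by (auto simp: subspace_def inner_add_right)

lemma dim_S2: "dim (range L \<inter> Jcx ` range L) + 2 * CARD('n) \<ge> 2 * CARD('d)"
proof -
  have "dim {x + y |x y. x \<in> range L \<and> y \<in> Jcx ` range L} + dim (range L \<inter> Jcx ` range L)
      = dim (range L) + dim (Jcx ` range L)"
    by (rule dim_sums_Int[OF subspace_V subspace_JV])
  moreover have "dim {x + y |x y. x \<in> range L \<and> y \<in> Jcx ` range L} \<le> 2 * CARD('n)"
    using dim_subset_UNIV[of "{x + y |x y. x \<in> range L \<and> y \<in> Jcx ` range L}"] by simp
  ultimately show ?thesis using dim_V dim_JV by linarith
qed

lemma S1_JV: "x \<in> sympl_compl p (range L) \<Longrightarrow> x \<in> Jcx ` range L \<Longrightarrow> x = 0"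
proof -
  assume x1: "x \<in> sympl_compl p (range L)" and x2: "x \<in> Jcx ` range L"
  then obtain v where v: "v \<in> range L" "x = Jcx v" by auto
  have "omega p x v = 0" using x1 v(1) unfolding sympl_compl_def by blast
  then have "bergman_riem p x x = 0" using v(2) by (simp add: omega_def)
  then show "x = 0" using b_pos[OF np] by (metis less_irrefl)
qed

end

lemma indep_enum:
  fixes f :: "nat \<Rightarrow> 'a::real_vector"
  assumes B: "independent B" and f: "bij_betw f {0..<n} B"
    and s: "(\<Sum>j<n. a j *\<^sub>R f j) = 0" and j: "j < n"
  shows "a j = 0"
proof -
  define g where "g = inv_into {0..<n} f"
  have "(\<Sum>b\<in>B. a (g b) *\<^sub>R b) = (\<Sum>j\<in>{0..<n}. a (g (f j)) *\<^sub>R f j)"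
    by (rule sum.reindex_bij_betw[OF f, symmetric])
  also have "\<dots> = (\<Sum>j<n. a j *\<^sub>R f j)"
    using f by (auto simp: g_def bij_betw_def lessThan_atLeast0 intro!: sum.cong)
  finally have "(\<Sum>b\<in>B. a (g b) *\<^sub>R b) = 0" using s by simp
  moreover have fin: "finite B" using f bij_betw_finite by blast
  ultimately have "\<forall>b\<in>B. a (g b) = 0" using independentD[OF B fin order_refl, of "\<lambda>b. a (g b)"] by blast
  moreover have "f j \<in> B" using f j by (auto simp: bij_betw_def)
  moreover have "g (f j) = j" using f j by (auto simp: g_def bij_betw_def)
  ultimately show ?thesis by metis
qed

lemma mult_index_col: "A \<in> carrier_mat n n \<Longrightarrow> B \<in> carrier_mat n k \<Longrightarrow> i < n \<Longrightarrow> j < k \<Longrightarrow>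
   (A * B) $$ (i,j) = (A *\<^sub>v col B j) $ i"
  by simp

context geo begin

lemma iso_det:
  assumes iso: "\<And>x y. x \<in> range L \<Longrightarrow> y \<in> range L \<Longrightarrow> omega p x y = 0" and m: "m \<ge> 1"
  shows "det (O_mat m Wm) = of_nat m ^ CARD('d)"
proof -
  have H0: "Hm = 0\<^sub>m CARD('d) CARD('d)"
    by (rule eq_matI) (auto simp: Hm_def e_def iso)
  have W0: "Wm = 0\<^sub>m CARD('d) CARD('d)"
    unfolding Wm_def H0 using Gi(1) by simp
  have "det (O_mat m Wm) = 2^((m-1) * card {j. j<CARD('d) \<and> (0::real) = 1}) * of_nat m ^ card {j. j<CARD('d) \<and> (0::real) \<noteq> 1}"
    by (rule det_O_final[OF Wm_carrier one_carrier_mat]) (use m W0 in auto)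
  then show ?thesis by simp
qed

lemma E_mat_vec:
  assumes C: "C \<in> carrier_mat CARD('d) CARD('d)" and v: "v \<in> carrier_vec CARD('d)"
  shows "E (C *\<^sub>v v) = (\<Sum>j<CARD('d). (v $ j) *\<^sub>R E (col C j))"
proof -
  have "E (C *\<^sub>v v) = (\<Sum>i<CARD('d). (\<Sum>j<CARD('d). C $$ (i,j) * v $ j) *\<^sub>R e i)"
    unfolding E_def using C v by (intro sum.cong) (auto simp: scalar_prod_def lessThan_atLeast0)
  also have "\<dots> = (\<Sum>i<CARD('d). \<Sum>j<CARD('d). (C $$ (i,j) * v $ j) *\<^sub>R e i)"
    by (simp only: scaleR_sum_left)
  also have "\<dots> = (\<Sum>j<CARD('d). \<Sum>i<CARD('d). (C $$ (i,j) * v $ j) *\<^sub>R e i)"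
    by (rule sum.swap)
  also have "\<dots> = (\<Sum>j<CARD('d). (v $ j) *\<^sub>R (\<Sum>i<CARD('d). C $$ (i,j) *\<^sub>R e i))"
    by (simp only: scaleR_sum_right scaleR_scaleR mult.commute)
  also have "\<dots> = (\<Sum>j<CARD('d). (v $ j) *\<^sub>R E (col C j))"
    unfolding E_def using C by (intro sum.cong refl) (auto simp: col_def)
  finally show ?thesis .
qed


lemma coiso_det:
  assumes co: "sympl_compl p (range L) \<subseteq> range L" and m: "m \<ge> 1"
  shows "\<exists>q. q + CARD('d) = 2 * CARD('n) \<and> q \<le> CARD('d) \<and>
     det (O_mat m Wm) = 2^((m-1) * (CARD('d) - q)) * of_nat m ^ q"
proof -
  define S1 where "S1 = sympl_compl p (range L)"
  define S2 where "S2 = range L \<inter> Jcx ` range L"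
  define q where "q = dim S1"
  define d where "d = CARD('d)"
  have hq: "q + d = 2 * CARD('n)" using dim_S1 by (simp add: q_def S1_def d_def)
  have qd: "q \<le> d" using dim_subset[OF co] dim_V by (simp add: q_def S1_def d_def)
  have sS1: "subspace S1" using subspace_S1 by (simp add: S1_def)
  have sS2: "subspace S2" unfolding S2_def by (rule subspace_inter[OF subspace_V subspace_JV])
  have dS2: "dim S2 \<ge> d - q" using dim_S2 hq by (simp add: S2_def d_def)
  obtain B1 where B1: "B1 \<subseteq> S1" "independent B1" "card B1 = q"
    using basis_exists[of S1] by (metis q_def)
  obtain B2' where B2': "B2' \<subseteq> S2" "independent B2'" "card B2' = dim S2"
    using basis_exists[of S2] by metis
  obtain B2 where B2: "B2 \<subseteq> B2'" "card B2 = d - q" "finite B2"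
    using obtain_subset_with_card_n[of "d - q" B2'] dS2 B2'(3) by metis
  have iB2: "independent B2" using independent_mono[OF B2'(2) B2(1)] .
  have fB1: "finite B1" using finiteI_independent[OF B1(2)] .
  obtain f1 where f1: "bij_betw f1 {0..<q} B1" using ex_bij_betw_nat_finite[OF fB1] B1(3) by metis
  obtain f2 where f2: "bij_betw f2 {0..<d-q} B2" using ex_bij_betw_nat_finite[OF B2(3)] B2(2) by metis
  have f1S: "j < q \<Longrightarrow> f1 j \<in> S1" for j using f1 B1(1) by (auto simp: bij_betw_def)
  have f2S: "j < d - q \<Longrightarrow> f2 j \<in> S2" for j using f2 B2(1) B2'(1) by (force simp: bij_betw_def)
  define w where "w j = (if j < q then f1 j else f2 (j - q))" for j
  have wV: "j < d \<Longrightarrow> w j \<in> range L" for j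
    using f1S f2S co by (auto simp: w_def S1_def S2_def)
  define c where "c j = (SOME x. x \<in> carrier_vec CARD('d) \<and> E x = w j)" for j
  have c: "j < d \<Longrightarrow> c j \<in> carrier_vec CARD('d) \<and> E (c j) = w j" for j
    unfolding c_def by (rule someI_ex) (use range_E[OF wV] in blast)
  define Cr where "Cr = mat d d (\<lambda>(i,j). c j $ i)"
  define \<delta>r where "\<delta>r j = (if j < q then (0::real) else 1)" for j
  have Cr: "Cr \<in> carrier_mat CARD('d) CARD('d)" by (simp add: Cr_def d_def)
  have colC: "j < d \<Longrightarrow> col Cr j = c j" for j
    using c[of j] by (intro eq_vecI) (auto simp: Cr_def d_def)
  have WWC: "(Wm * (Wm * Cr)) $$ (i,j) = - \<delta>r j * Cr $$ (i,j)" if i: "i < CARD('d)" and j: "j < CARD('d)" for i j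
  proof -
    have "(Wm * (Wm * Cr)) $$ (i,j) = (Wm *\<^sub>v (Wm *\<^sub>v c j)) $ i"
      using mult_index_col[OF Wm_carrier mult_carrier_mat[OF Wm_carrier Cr] i j]
        col_mult2[OF Wm_carrier Cr j] colC[of j] j by (simp add: d_def)
    also have "\<dots> = - \<delta>r j * Cr $$ (i,j)"
    proof (cases "j < q")
      case True
      have "E (c j) \<in> sympl_compl p (range L)" using c[of j] f1S[OF True] True j
        by (simp add: w_def S1_def d_def)
      then have "Wm *\<^sub>v c j = 0\<^sub>v CARD('d)" using W_zero c[of j] j by (simp add: d_def)
      then show ?thesis using True i carrier_matD[OF Wm_carrier] by (simp add: \<delta>r_def)
    next
      case False
      have "w j \<in> S2" using f2S[of "j - q"] False j by (simp add: w_def d_def)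
      then obtain v where v: "v \<in> range L" "w j = Jcx v" by (auto simp: S2_def)
      have "Jcx (E (c j)) \<in> range L"
        using c[of j] j v subspace_neg[OF subspace_V v(1)] by (simp add: Jcx_Jcx d_def)
      then have "Wm *\<^sub>v (Wm *\<^sub>v c j) = - c j" using W_sq c[of j] j by (simp add: d_def)
      then show ?thesis using False i j carrier_vecD[OF conjunct1[OF c[of j]]] by (simp add: \<delta>r_def Cr_def d_def)
    qed
    finally show ?thesis .
  qed
  have dC: "det Cr \<noteq> 0"
  proof
    assume "det Cr = 0"
    then obtain v where v: "v \<in> carrier_vec CARD('d)" "v \<noteq> 0\<^sub>v CARD('d)" "Cr *\<^sub>v v = 0\<^sub>v CARD('d)"
      using det_0_iff_vec_prod_zero_field[OF Cr] by auto
    have "E (Cr *\<^sub>v v) = (\<Sum>j<d. (v $ j) *\<^sub>R w j)"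
      unfolding E_mat_vec[OF Cr v(1)] d_def using c colC by (intro sum.cong refl) (simp add: d_def)
    moreover have "E (0\<^sub>v CARD('d)) = 0" by (simp add: E_def)
    ultimately have sum0: "(\<Sum>j<d. (v $ j) *\<^sub>R w j) = 0" using v(3) by simp
    define s1 where "s1 = (\<Sum>j<q. (v $ j) *\<^sub>R f1 j)"
    define s2 where "s2 = (\<Sum>k<d-q. (v $ (q + k)) *\<^sub>R f2 k)"
    have "(\<Sum>j<d. (v $ j) *\<^sub>R w j) = (\<Sum>j\<in>{0..<q}. (v $ j) *\<^sub>R w j) + (\<Sum>j\<in>{q..<d}. (v $ j) *\<^sub>R w j)"
      using qd by (simp add: sum.atLeastLessThan_concat lessThan_atLeast0)
    also have "(\<Sum>j\<in>{0..<q}. (v $ j) *\<^sub>R w j) = s1"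
      unfolding s1_def lessThan_atLeast0 by (intro sum.cong refl) (simp add: w_def)
    also have "(\<Sum>j\<in>{q..<d}. (v $ j) *\<^sub>R w j) = s2"
      unfolding s2_def
      by (rule sum.reindex_bij_witness[of _ "\<lambda>k. q + k" "\<lambda>j. j - q"]) (auto simp: w_def)
    finally have s12: "s1 + s2 = 0" using sum0 by simp
    have s1S: "s1 \<in> S1" unfolding s1_def
      by (intro subspace_sum[OF sS1] subspace_scale[OF sS1] f1S) simp
    have s2S: "s2 \<in> S2" unfolding s2_def
      by (intro subspace_sum[OF sS2] subspace_scale[OF sS2] f2S) simp
    have "s1 = - s2" using s12 by (simp add: eq_neg_iff_add_eq_0)
    then have "s1 \<in> Jcx ` range L" using subspace_neg[OF subspace_JV, of s2] s2S by (simp add: S2_def)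
    then have z1: "s1 = 0" using S1_JV s1S by (simp add: S1_def)
    then have z2: "s2 = 0" using s12 by simp
    have "v = 0\<^sub>v CARD('d)"
    proof (rule eq_vecI)
      fix j assume "j < dim_vec (0\<^sub>v CARD('d))"
      then have j: "j < d" by (simp add: d_def)
      show "v $ j = 0\<^sub>v CARD('d) $ j"
      proof (cases "j < q")
        case True
        have "v $ j = 0" by (rule indep_enum[OF B1(2) f1 _ True, of "\<lambda>j. v $ j"]) (use z1 s1_def in simp)
        then show ?thesis using j by (simp add: d_def)
      next
        case False
        have "v $ (q + (j - q)) = 0"
          by (rule indep_enum[OF iB2 f2 _, of "\<lambda>k. v $ (q + k)"]) (use z2 s2_def j False in simp_all)
        then show ?thesis using j False by (simp add: d_def)
      qed
    qed (use v(1) in simp)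
    with v(2) show False by simp
  qed
  have "det (O_mat m Wm) = 2^((m-1) * card {j. j<CARD('d) \<and> \<delta>r j = 1}) * of_nat m ^ card {j. j<CARD('d) \<and> \<delta>r j \<noteq> 1}"
    by (rule det_O_final[OF Wm_carrier Cr dC WWC _ m]) (auto simp: \<delta>r_def)
  also have "{j. j<CARD('d) \<and> \<delta>r j = 1} = {q..<d}" by (auto simp: \<delta>r_def d_def)
  also have "{j. j<CARD('d) \<and> \<delta>r j \<noteq> 1} = {..<q}" using qd by (auto simp: \<delta>r_def d_def)
  finally have "det (O_mat m Wm) = 2^((m-1) * (d - q)) * of_nat m ^ q" by simp
  then show ?thesis using hq qd by (auto simp: d_def)
qed

end

lemma tangent_unique:
  fixes \<gamma>1 \<gamma>2 :: "real^'d \<Rightarrow> complex^'n"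
  assumes P1: "local_param \<Gamma> U1 \<gamma>1" and t1: "t1 \<in> ball 0 1"
    and P2: "local_param \<Gamma> U2 \<gamma>2" and t2: "t2 \<in> ball 0 1"
    and eq: "\<gamma>2 t2 = \<gamma>1 t1"
  shows "range (frechet_derivative \<gamma>2 (at t2)) \<subseteq> range (frechet_derivative \<gamma>1 (at t1))"
proof
  define L1 where "L1 = frechet_derivative \<gamma>1 (at t1)"
  define L2 where "L2 = frechet_derivative \<gamma>2 (at t2)"
  define p where "p = \<gamma>1 t1"
  from P1 obtain g1 where U1: "open U1" and H1: "homeomorphism (ball 0 1) (\<Gamma> \<inter> U1) \<gamma>1 g1"
    and D1: "\<gamma>1 differentiable (at t1)" and I1: "inj L1"
    using t1 unfolding local_param_def L1_def by blast
  from P2 obtain g2 where H2: "homeomorphism (ball 0 1) (\<Gamma> \<inter> U2) \<gamma>2 g2"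
    and D2: "\<gamma>2 differentiable (at t2)"
    using t2 unfolding local_param_def by blast
  have d1: "(\<gamma>1 has_derivative L1) (at t1)" using D1 frechet_derivative_works L1_def by blast
  have d2: "(\<gamma>2 has_derivative L2) (at t2)" using D2 frechet_derivative_works L2_def by blast
  have lin1: "linear L1" using has_derivative_linear[OF d1] .
  have lin2: "linear L2" using has_derivative_linear[OF d2] .
  obtain c where c: "c > 0" "\<And>x. c * norm x \<le> norm (L1 x)"
    using linear_inj_bounded_below_pos[OF lin1 I1] by blast
  have cl: "closed (range L1)"
    by (rule closed_subspace[OF linear_subspace_image[OF lin1 subspace_UNIV]])
  fix v assume "v \<in> range (frechet_derivative \<gamma>2 (at t2))"
  then obtain w where vw: "v = L2 w" unfolding L2_def by blast
  show "v \<in> range (frechet_derivative \<gamma>1 (at t1))"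
  proof (cases "w = 0")
    case True
    then have "v = L1 0" using vw linear_0[OF lin1] linear_0[OF lin2] by simp
    then show ?thesis unfolding L1_def by blast
  next
    case False
    then have nw: "norm w > 0" by simp
    have "v \<in> closure (range L1)"
      unfolding closure_approachable
    proof (intro allI impI)
      fix e :: real assume e: "e > 0"
      define K where "K = 2 * (norm v + norm w) / c + norm w"
      have K0: "K \<ge> 0" using c by (simp add: K_def)
      define \<epsilon> where "\<epsilon> = min 1 (min (c/2) (e / (2 * (K + 1))))"
      have \<epsilon>: "\<epsilon> > 0" "\<epsilon> \<le> 1" "\<epsilon> \<le> c/2" "\<epsilon> \<le> e / (2 * (K + 1))"
      proof -
        have "e / (2 * (K + 1)) > 0" using e K0 by simp
        then show "\<epsilon> > 0" using c(1) by (simp add: \<epsilon>_def)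
        show "\<epsilon> \<le> 1" unfolding \<epsilon>_def by (rule min.cobounded1)
        show "\<epsilon> \<le> c/2" unfolding \<epsilon>_def by (meson min.cobounded1 min.cobounded2 order_trans)
        show "\<epsilon> \<le> e / (2 * (K + 1))" unfolding \<epsilon>_def by (meson min.cobounded2 order_trans)
      qed
      obtain \<delta>1 where \<delta>1: "\<delta>1 > 0" "\<And>y. norm (y - t1) < \<delta>1 \<Longrightarrow> norm (\<gamma>1 y - \<gamma>1 t1 - L1 (y - t1)) \<le> \<epsilon> * norm (y - t1)"
        using d1 \<epsilon>(1) unfolding has_derivative_at_alt by blast
      obtain \<delta>2 where \<delta>2: "\<delta>2 > 0" "\<And>y. norm (y - t2) < \<delta>2 \<Longrightarrow> norm (\<gamma>2 y - \<gamma>2 t2 - L2 (y - t2)) \<le> \<epsilon> * norm (y - t2)"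
        using d2 \<epsilon>(1) unfolding has_derivative_at_alt by blast
      have pS: "p \<in> \<Gamma> \<inter> U1" using H1 t1 unfolding homeomorphism_def p_def by blast
      have g1p: "g1 p = t1" using H1 t1 unfolding homeomorphism_def p_def by blast
      have cg1: "continuous_on (\<Gamma> \<inter> U1) g1" using H1 unfolding homeomorphism_def by blast
      obtain \<eta> where \<eta>: "\<eta> > 0" "\<And>q. q \<in> \<Gamma> \<inter> U1 \<Longrightarrow> dist q p < \<eta> \<Longrightarrow> dist (g1 q) (g1 p) < \<delta>1"
        using cg1 pS \<delta>1(1) unfolding continuous_on_iff by metis
      obtain \<rho> where \<rho>: "\<rho> > 0" "ball p \<rho> \<subseteq> U1" using U1 pS open_contains_ball by blast
      have "continuous (at t2) \<gamma>2" using has_derivative_continuous[OF d2] .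
      then obtain \<delta>3 where \<delta>3: "\<delta>3 > 0" "\<And>y. dist y t2 < \<delta>3 \<Longrightarrow> dist (\<gamma>2 y) (\<gamma>2 t2) < min \<eta> \<rho>"
        using \<eta>(1) \<rho>(1) unfolding continuous_at_eps_delta by (metis min_less_iff_conj)
      obtain \<delta>4 where \<delta>4: "\<delta>4 > 0" "ball t2 \<delta>4 \<subseteq> ball 0 1"
        using t2 open_ball open_contains_ball by blast
      define s where "s = min (min \<delta>2 \<delta>3) \<delta>4 / (2 * norm w)"
      have s: "s > 0" using \<delta>2 \<delta>3 \<delta>4 nw by (simp add: s_def)
      have m0: "min (min \<delta>2 \<delta>3) \<delta>4 > 0" using \<delta>2 \<delta>3 \<delta>4 by simp
      have "s * norm w = min (min \<delta>2 \<delta>3) \<delta>4 / 2" using nw by (simp add: s_def)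
      then have snw: "s * norm w < min (min \<delta>2 \<delta>3) \<delta>4" using m0 by linarith
      define y where "y = t2 + s *\<^sub>R w"
      have ny: "norm (y - t2) = s * norm w" using s by (simp add: y_def)
      have "y \<in> ball t2 \<delta>4" using ny snw by (simp add: dist_norm norm_minus_commute)
      then have yB: "y \<in> ball 0 1" using \<delta>4(2) by blast
      define q where "q = \<gamma>2 y"
      have qG: "q \<in> \<Gamma>" using H2 yB unfolding homeomorphism_def q_def by blast
      have dq: "dist q p < min \<eta> \<rho>" using \<delta>3(2)[of y] ny snw eq by (simp add: dist_norm q_def p_def)
      have qU: "q \<in> \<Gamma> \<inter> U1" using qG \<rho>(2) dq by (auto simp: dist_commute)
      define x where "x = g1 q - t1"
      have nx: "norm x < \<delta>1" using \<eta>(2)[OF qU] dq g1p by (simp add: dist_norm x_def)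
      have gq: "\<gamma>1 (g1 q) = q" using H1 qU unfolding homeomorphism_def by blast
      have A: "norm (q - p - L1 x) \<le> \<epsilon> * norm x"
        using \<delta>1(2)[of "g1 q"] nx gq by (simp add: x_def p_def)
      have B: "norm (q - p - s *\<^sub>R v) \<le> \<epsilon> * (s * norm w)"
        using \<delta>2(2)[of y] ny snw eq s by (simp add: y_def q_def p_def vw linear_scale[OF lin2])
      have C1: "c * norm x \<le> norm (q - p) + \<epsilon> * norm x"
        using c(2)[of x] A norm_triangle_ineq4[of "q - p" "q - p - L1 x"] by simp
      have C2: "norm (q - p) \<le> s * norm v + \<epsilon> * (s * norm w)"
        using B norm_triangle_ineq4[of "s *\<^sub>R v" "s *\<^sub>R v - (q - p)"] s
        by (simp add: norm_minus_commute)
      have e1: "\<epsilon> * norm x \<le> (c/2) * norm x" using mult_right_mono[OF \<epsilon>(3) norm_ge_zero[of x]] .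
      have e2: "\<epsilon> * (s * norm w) \<le> s * norm w"
        using mult_right_mono[OF \<epsilon>(2), of "s * norm w"] s by simp
      have "(c/2) * norm x \<le> s * (norm v + norm w)" using C1 C2 e1 e2 by (simp add: algebra_simps)
      then have X: "norm x \<le> s * (2 * (norm v + norm w) / c)" using c(1)
        by (simp add: field_simps)
      have D: "norm (s *\<^sub>R v - L1 x) \<le> \<epsilon> * norm x + \<epsilon> * (s * norm w)"
      proof -
        have "s *\<^sub>R v - L1 x = (q - p - L1 x) - (q - p - s *\<^sub>R v)" by (simp add: algebra_simps)
        then have "norm (s *\<^sub>R v - L1 x) \<le> norm (q - p - L1 x) + norm (q - p - s *\<^sub>R v)"
          by (metis norm_triangle_ineq4)
        then show ?thesis using A B by linarith
      qed
      have "\<epsilon> * norm x \<le> \<epsilon> * (s * (2 * (norm v + norm w) / c))"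
        using mult_left_mono[OF X, of \<epsilon>] \<epsilon>(1) by simp
      then have D2: "norm (s *\<^sub>R v - L1 x) \<le> \<epsilon> * s * K"
        using D by (simp add: K_def algebra_simps)
      have "s *\<^sub>R (v - L1 ((1/s) *\<^sub>R x)) = s *\<^sub>R v - L1 x"
        using s by (simp add: linear_scale[OF lin1] algebra_simps)
      then have "s * norm (v - L1 ((1/s) *\<^sub>R x)) = norm (s *\<^sub>R v - L1 x)"
        using s by (metis norm_scaleR abs_of_pos)
      then have "s * norm (v - L1 ((1/s) *\<^sub>R x)) \<le> s * (\<epsilon> * K)" using D2 by (simp add: algebra_simps)
      then have F: "norm (v - L1 ((1/s) *\<^sub>R x)) \<le> \<epsilon> * K" using s by simp
      have "\<epsilon> * K \<le> e / (2 * (K + 1)) * K" using mult_right_mono[OF \<epsilon>(4) K0] .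
      also have "\<dots> < e"
      proof -
        have "0 \<le> K * e" using K0 e by simp
        then show ?thesis using e K0 by (simp add: field_simps add_nonneg_pos)
      qed
      finally have "dist (L1 ((1/s) *\<^sub>R x)) v < e" using F by (simp add: dist_norm norm_minus_commute)
      then show "\<exists>y\<in>range L1. dist y v < e" by blast
    qed
    then show ?thesis using cl unfolding L1_def by simp
  qed
qed

lemma sqrt_pow_powr: "(y::real) > 0 \<Longrightarrow> sqrt (y ^ k) = y powr (real k / 2)"
  by (simp add: powr_half_sqrt_powr powr_realpow)

lemma csqrt_formula:
  assumes m: "m > 0"
  shows "csqrt (2^a * of_nat m ^ q :: complex) = complex_of_real (2 powr (real a / 2) * real m powr (real q / 2))"
proof -
  have "(2^a * of_nat m ^ q :: complex) = complex_of_real (2^a * real m ^ q)" by simp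
  then have "csqrt (2^a * of_nat m ^ q :: complex) = complex_of_real (sqrt (2^a * real m ^ q))"
    by (simp only: csqrt_of_real[of "2^a * real m ^ q"]) simp
  also have "sqrt (2^a * real m ^ q) = 2 powr (real a / 2) * real m powr (real q / 2)"
    using m by (simp add: real_sqrt_mult sqrt_pow_powr)
  finally show ?thesis .
qed

theorem mainTheorem19:
  fixes \<Gamma> :: "(complex^'n) set" and U :: "(complex^'n) set"
    and \<gamma> :: "real^'d \<Rightarrow> complex^'n" and t :: "real^'d" and m :: nat
  assumes "embedded_submanifold TYPE('d) \<Gamma>"
    and "isotropic TYPE('d) \<Gamma> \<or> coisotropic TYPE('d) \<Gamma>"
    and "local_param \<Gamma> U \<gamma>" and "t \<in> ball 0 1"
    and "m \<ge> 2"
  shows "(isotropic TYPE('d) \<Gamma> \<longrightarrow>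
            csqrt (det (O_mat m (W_mat \<gamma> t))) =
              complex_of_real (real m powr (real CARD('d) / 2)))
       \<and> (coisotropic TYPE('d) \<Gamma> \<longrightarrow>
            csqrt (det (O_mat m (W_mat \<gamma> t))) =
              complex_of_real (2 powr ((real CARD('d) - real CARD('n)) * (real m - 1))
                * real m powr (real CARD('n) - real CARD('d) / 2)))"
proof -
  note emb = assms(1) and P = assms(3) and tB = assms(4) and m2 = assms(5)
  define p where "p = \<gamma> t"
  define L where "L = frechet_derivative \<gamma> (at t)"
  from P obtain g where H: "homeomorphism (ball 0 1) (\<Gamma> \<inter> U) \<gamma> g"
    and D: "\<gamma> differentiable (at t)" and I: "inj L"
    using tB unfolding local_param_def L_def by blast
  have pG: "p \<in> \<Gamma>" using H tB unfolding homeomorphism_def p_def by blast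
  have np: "norm p < 1" using emb pG unfolding embedded_submanifold_def by auto
  have lin: "linear L" using has_derivative_linear D frechet_derivative_works L_def by blast
  interpret geo p L by (rule geo.intro[OF np lin I])
  have W: "W_mat \<gamma> t = Wm"
    unfolding Wm_def Gi_def Gm_def Hm_def e_def
    by (simp add: W_mat_def G_mat_def H_mat_def partial_t_def L_def p_def)
  have T: "tangent_image TYPE('d) \<Gamma> p = range L"
  proof
    show "tangent_image TYPE('d) \<Gamma> p \<subseteq> range L"
    proof
      fix v assume "v \<in> tangent_image TYPE('d) \<Gamma> p"
      then obtain U' and \<gamma>' :: "real^'d \<Rightarrow> complex^'n" and t' where
        v: "local_param \<Gamma> U' \<gamma>'" "t' \<in> ball 0 1" "\<gamma>' t' = p" "v \<in> range (frechet_derivative \<gamma>' (at t'))"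
        unfolding tangent_image_def by blast
      show "v \<in> range L"
        using tangent_unique[OF P tB v(1) v(2)] v(3,4) by (auto simp: L_def p_def)
    qed
    show "range L \<subseteq> tangent_image TYPE('d) \<Gamma> p"
      unfolding tangent_image_def L_def p_def using P tB by blast
  qed
  have m1: "m \<ge> 1" and m0: "m > 0" using m2 by auto
  show ?thesis
  proof (intro conjI impI)
    assume iso: "isotropic TYPE('d) \<Gamma>"
    have "range L \<subseteq> sympl_compl p (range L)"
      using iso pG T unfolding isotropic_def by metis
    then have "\<And>x y. x \<in> range L \<Longrightarrow> y \<in> range L \<Longrightarrow> omega p x y = 0"
      unfolding sympl_compl_def by blast
    then have "det (O_mat m Wm) = 2^0 * of_nat m ^ CARD('d)" using iso_det m1 by simp
    then show "csqrt (det (O_mat m (W_mat \<gamma> t))) = complex_of_real (real m powr (real CARD('d) / 2))"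
      unfolding W using csqrt_formula[OF m0, of 0 "CARD('d)"] by simp
  next
    assume co: "coisotropic TYPE('d) \<Gamma>"
    have "sympl_compl p (range L) \<subseteq> range L"
      using co pG T unfolding coisotropic_def by metis
    then obtain q where q: "q + CARD('d) = 2 * CARD('n)" "q \<le> CARD('d)"
      "det (O_mat m Wm) = 2^((m-1) * (CARD('d) - q)) * of_nat m ^ q"
      using coiso_det m1 by blast
    have e1: "real ((m-1) * (CARD('d) - q)) / 2 = (real CARD('d) - real CARD('n)) * (real m - 1)"
    proof -
      have hq': "real q = 2 * real CARD('n) - real CARD('d)" using q(1) by (metis add_diff_cancel_right' of_nat_add of_nat_mult of_nat_numeral)
      have r: "real ((m-1) * (CARD('d) - q)) = (real m - 1) * (real CARD('d) - real q)"
        by (simp only: of_nat_mult of_nat_diff[OF m1] of_nat_diff[OF q(2)] of_nat_1)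
      show ?thesis unfolding r hq' by (simp add: field_simps)
    qed
    have e2: "real q / 2 = real CARD('n) - real CARD('d) / 2"
    proof -
      have "real q + real CARD('d) = 2 * real CARD('n)" using q(1) by (metis of_nat_add of_nat_mult of_nat_numeral)
      then show ?thesis by simp
    qed
    show "csqrt (det (O_mat m (W_mat \<gamma> t))) = complex_of_real (2 powr ((real CARD('d) - real CARD('n)) * (real m - 1))
                * real m powr (real CARD('n) - real CARD('d) / 2))"
      unfolding W q(3) csqrt_formula[OF m0] e1 e2 ..
  qed
qed

end
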